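(* Let $H_0$ satisfy TQO-1 and TQO-2 with parameter $L^*$. Fix an integer $1\le r\le L^*$ and operators $V_{r,A}$, $A\in\mathcal S(r)$, each Hermitian and supported on $A$, with $V_{r,A}P=PV_{r,A}=0$ and $\|V_{r,A}\|\le w$. Let $W(r)=\sum_{A\in\mathcal S(r)}V_{r,A}$. Then there is a constant $C$ independent of $L$, $r$ and $w$ such that $$\|W(r)\psi\|\le C\,w\,r^2\,\|H_0\psi\|\quad\text{for all }\psi\in\mathcal H .$$
   Context: Lattice $\Lambda=\mathbb Z_L\times\mathbb Z_L$ (periodic), each site a qudit of fixed finite dimension, $\mathcal H=\bigotimes_u\mathcal H_u$. $\mathcal S(r)$: set of $r\times r$ square blocks. $H_0=\sum_{A\in\mathcal S(2)}Q_A$ with $Q_A$ pairwise commuting projectors supported on $A$; $P=\prod_{A\in\mathcal S(2)}(I-Q_A)\neq0$ is the ground-space projector (ground energy $0$). For $B\in\mathcal S(r)$: $P_B=\prod_{A\in\mathcal S(2),A\subseteq B}(I-Q_A)$, $Q_B=I-P_B$. TQO-1: for every $A\in\mathcal S(r)$, $r\le L^*$, and every $O_A$ supported on $A$, $PO_AP=cP$ for some $c\in\mathbb C$. TQO-2: for every $A\in\mathcal S(r)$, $r\le L^*$, with $B\in\mathcal S(r+2)$ the square containing $A$ and its nearest neighbours, $O_AP=0$ implies $O_AP_B=0$ for $O_A$ supported on $A$. *)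

theory Defs
  imports Complex_Main
begin

text \<open>Sites of the periodic lattice Z_L x Z_L are pairs (i,j) with i,j < L.
A basis configuration assigns to each site a qudit level < d (and 0 off the lattice).
Operators are matrices indexed by configurations, vectors are functions on configurations.\<close>

type_synonym cfg = "nat \<times> nat \<Rightarrow> nat"
type_synonym vec = "cfg \<Rightarrow> complex"
type_synonym op = "cfg \<Rightarrow> cfg \<Rightarrow> complex"

definition lattice :: "nat \<Rightarrow> (nat \<times> nat) set" where
  "lattice L = {0..<L} \<times> {0..<L}"

definition cfgs :: "nat \<Rightarrow> nat \<Rightarrow> cfg set" where
  "cfgs d L = {s. \<forall>u. (u \<in> lattice L \<longrightarrow> s u < d) \<and> (u \<notin> lattice L \<longrightarrow> s u = 0)}"

definition block :: "nat \<Rightarrow> nat \<Rightarrow> nat \<Rightarrow> nat \<Rightarrow> (nat \<times> nat) set" where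
  "block L x y r = {((x + i) mod L, (y + j) mod L) | i j. i < r \<and> j < r}"

definition squares :: "nat \<Rightarrow> nat \<Rightarrow> (nat \<times> nat) set set" where
  "squares L r = {block L x y r | x y. x < L \<and> y < L}"

definition square_list :: "nat \<Rightarrow> nat \<Rightarrow> (nat \<times> nat) set list" where
  "square_list L r = remdups [block L x y r. x \<leftarrow> [0..<L], y \<leftarrow> [0..<L]]"

definition idop :: op where
  "idop s t = (if s = t then 1 else 0)"

definition opmul :: "nat \<Rightarrow> nat \<Rightarrow> op \<Rightarrow> op \<Rightarrow> op" where
  "opmul d L A B = (\<lambda>s t. \<Sum>m\<in>cfgs d L. A s m * B m t)"

definition opapp :: "nat \<Rightarrow> nat \<Rightarrow> op \<Rightarrow> vec \<Rightarrow> vec" where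
  "opapp d L A \<psi> = (\<lambda>s. \<Sum>t\<in>cfgs d L. A s t * \<psi> t)"

text \<open>Ordered product of a list of operators (used only for pairwise commuting factors).\<close>
definition oprod :: "nat \<Rightarrow> nat \<Rightarrow> op list \<Rightarrow> op" where
  "oprod d L As = foldr (opmul d L) As idop"

definition opeq :: "nat \<Rightarrow> nat \<Rightarrow> op \<Rightarrow> op \<Rightarrow> bool" where
  "opeq d L A B \<longleftrightarrow> (\<forall>s\<in>cfgs d L. \<forall>t\<in>cfgs d L. A s t = B s t)"

definition zeroop :: op where
  "zeroop s t = 0"

definition hermitian :: "nat \<Rightarrow> nat \<Rightarrow> op \<Rightarrow> bool" where
  "hermitian d L A \<longleftrightarrow> (\<forall>s\<in>cfgs d L. \<forall>t\<in>cfgs d L. A s t = cnj (A t s))"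

definition projector :: "nat \<Rightarrow> nat \<Rightarrow> op \<Rightarrow> bool" where
  "projector d L A \<longleftrightarrow> hermitian d L A \<and> opeq d L (opmul d L A A) A"

definition vnorm :: "nat \<Rightarrow> nat \<Rightarrow> vec \<Rightarrow> real" where
  "vnorm d L \<psi> = sqrt (\<Sum>s\<in>cfgs d L. (cmod (\<psi> s))\<^sup>2)"

text \<open>O is supported on X: O = O_X \<otimes> I on the complement of X.\<close>
definition agree_off :: "(nat \<times> nat) set \<Rightarrow> cfg \<Rightarrow> cfg \<Rightarrow> bool" where
  "agree_off X s t \<longleftrightarrow> (\<forall>u. u \<notin> X \<longrightarrow> s u = t u)"

definition supported :: "nat \<Rightarrow> nat \<Rightarrow> (nat \<times> nat) set \<Rightarrow> op \<Rightarrow> bool" where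
  "supported d L X Op \<longleftrightarrow>
     (\<forall>s\<in>cfgs d L. \<forall>t\<in>cfgs d L. \<not> agree_off X s t \<longrightarrow> Op s t = 0) \<and>
     (\<forall>s\<in>cfgs d L. \<forall>t\<in>cfgs d L. \<forall>s'\<in>cfgs d L. \<forall>t'\<in>cfgs d L.
        agree_off X s t \<longrightarrow> agree_off X s' t' \<longrightarrow>
        (\<forall>u\<in>X. s u = s' u \<and> t u = t' u) \<longrightarrow> Op s t = Op s' t')"

definition compl_op :: "op \<Rightarrow> op" where
  "compl_op Q = (\<lambda>s t. idop s t - Q s t)"

definition ground_proj :: "nat \<Rightarrow> nat \<Rightarrow> ((nat \<times> nat) set \<Rightarrow> op) \<Rightarrow> op" where
  "ground_proj d L Q = oprod d L (map (\<lambda>A. compl_op (Q A)) (square_list L 2))"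

definition local_proj :: "nat \<Rightarrow> nat \<Rightarrow> ((nat \<times> nat) set \<Rightarrow> op) \<Rightarrow> (nat \<times> nat) set \<Rightarrow> op" where
  "local_proj d L Q B = oprod d L (map (\<lambda>A. compl_op (Q A)) (filter (\<lambda>A. A \<subseteq> B) (square_list L 2)))"

definition H0app :: "nat \<Rightarrow> nat \<Rightarrow> ((nat \<times> nat) set \<Rightarrow> op) \<Rightarrow> vec \<Rightarrow> vec" where
  "H0app d L Q \<psi> = (\<lambda>s. \<Sum>A\<in>squares L 2. opapp d L (Q A) \<psi> s)"

definition frustration_free_setup :: "nat \<Rightarrow> nat \<Rightarrow> ((nat \<times> nat) set \<Rightarrow> op) \<Rightarrow> bool" where
  "frustration_free_setup d L Q \<longleftrightarrow>
     (\<forall>A\<in>squares L 2. projector d L (Q A) \<and> supported d L A (Q A)) \<and>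
     (\<forall>A\<in>squares L 2. \<forall>B\<in>squares L 2. opeq d L (opmul d L (Q A) (Q B)) (opmul d L (Q B) (Q A))) \<and>
     \<not> opeq d L (ground_proj d L Q) zeroop"

definition TQO1 :: "nat \<Rightarrow> nat \<Rightarrow> ((nat \<times> nat) set \<Rightarrow> op) \<Rightarrow> nat \<Rightarrow> bool" where
  "TQO1 d L Q Lstar \<longleftrightarrow>
     (\<forall>r'. 1 \<le> r' \<and> r' \<le> Lstar \<longrightarrow> (\<forall>A\<in>squares L r'. \<forall>Op. supported d L A Op \<longrightarrow>
        (\<exists>c::complex. opeq d L
           (opmul d L (ground_proj d L Q) (opmul d L Op (ground_proj d L Q)))
           (\<lambda>s t. c * ground_proj d L Q s t))))"

text \<open>For A = block x y r', the square containing A and its nearest neighbours is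
  the (r'+2) x (r'+2) square with corner (x-1, y-1) (mod L).\<close>
definition TQO2 :: "nat \<Rightarrow> nat \<Rightarrow> ((nat \<times> nat) set \<Rightarrow> op) \<Rightarrow> nat \<Rightarrow> bool" where
  "TQO2 d L Q Lstar \<longleftrightarrow>
     (\<forall>r'. 1 \<le> r' \<and> r' \<le> Lstar \<longrightarrow> (\<forall>x<L. \<forall>y<L. \<forall>Op.
        supported d L (block L x y r') Op \<longrightarrow>
        opeq d L (opmul d L Op (ground_proj d L Q)) zeroop \<longrightarrow>
        opeq d L (opmul d L Op (local_proj d L Q (block L ((x + L - 1) mod L) ((y + L - 1) mod L) (r' + 2)))) zeroop))"

end

theory Submission
  imports Defs "HOL-Library.Function_Algebras" "HOL-Analysis.L2_Norm"
begin

lemma fun_sum_apply: "(\<Sum>i\<in>I. (f i :: 'a \<Rightarrow> 'b::comm_monoid_add)) x = (\<Sum>i\<in>I. f i x)"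
  by (induction I rule: infinite_finite_induct) auto

lemma fun_sum_list_apply: "(sum_list (map f xs) :: 'a \<Rightarrow> 'b::comm_monoid_add) x = sum_list (map (\<lambda>i. f i x) xs)"
  by (induction xs) auto

lemma finite_cfgs: "finite (cfgs d L)"
proof -
  have "cfgs d L = {s. \<forall>u. (u \<in> lattice L \<longrightarrow> s u \<in> {..<d}) \<and> (u \<notin> lattice L \<longrightarrow> s u = 0)}"
    unfolding cfgs_def by auto
  moreover have "finite (lattice L)" unfolding lattice_def by auto
  ultimately show ?thesis using finite_set_of_finite_funs[of "lattice L" "{..<d}" 0] by simp
qed

locale lat = fixes d L :: nat
begin

abbreviation "S \<equiv> cfgs d L"

definition rv :: "vec \<Rightarrow> vec" where "rv \<psi> = (\<lambda>s. if s \<in> S then \<psi> s else 0)"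
definition ap :: "op \<Rightarrow> vec \<Rightarrow> vec" where "ap A \<psi> = rv (opapp d L A \<psi>)"
definition sc :: "complex \<Rightarrow> vec \<Rightarrow> vec" where "sc c \<psi> = (\<lambda>s. c * \<psi> s)"
definition ip :: "vec \<Rightarrow> vec \<Rightarrow> complex" where "ip \<phi> \<psi> = (\<Sum>s\<in>S. cnj (\<phi> s) * \<psi> s)"
abbreviation nm where "nm \<equiv> vnorm d L"

definition lin :: "(vec \<Rightarrow> vec) \<Rightarrow> bool" where
  "lin f \<longleftrightarrow> (\<forall>a b. f (a + b) = f a + f b) \<and> (\<forall>a b. f (a - b) = f a - f b) \<and>
     (\<forall>c a. f (sc c a) = sc c (f a)) \<and> (\<forall>a. f (rv a) = f a) \<and> (\<forall>a. rv (f a) = f a)"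
definition sa :: "(vec \<Rightarrow> vec) \<Rightarrow> bool" where
  "sa f \<longleftrightarrow> (\<forall>\<phi> \<psi>. ip (f \<phi>) \<psi> = ip \<phi> (f \<psi>))"
definition idem :: "(vec \<Rightarrow> vec) \<Rightarrow> bool" where
  "idem f \<longleftrightarrow> (\<forall>\<phi>. f (f \<phi>) = f \<phi>)"
definition comm :: "(vec \<Rightarrow> vec) \<Rightarrow> (vec \<Rightarrow> vec) \<Rightarrow> bool" where
  "comm f g \<longleftrightarrow> (\<forall>\<phi>. f (g \<phi>) = g (f \<phi>))"

lemma rv_rv[simp]: "rv (rv a) = rv a" by (auto simp: rv_def)
lemma rv_add: "rv (a + b) = rv a + rv b" by (auto simp: rv_def)
lemma rv_diff: "rv (a - b) = rv a - rv b" by (auto simp: rv_def)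
lemma rv_sc: "rv (sc c a) = sc c (rv a)" by (auto simp: rv_def sc_def)
lemma rv_zero[simp]: "rv 0 = 0" by (auto simp: rv_def)
lemma lin_rv: "lin rv" by (auto simp: lin_def rv_add rv_diff rv_sc)

lemma lin_ap: "lin (ap A)"
  unfolding lin_def ap_def opapp_def rv_def sc_def
  by (auto simp: fun_eq_iff algebra_simps sum.distrib sum_subtractf sum_distrib_left)

lemma linD:
  assumes "lin f"
  shows "f (a + b) = f a + f b" "f (a - b) = f a - f b" "f (sc c a) = sc c (f a)" "f (rv a) = f a" "rv (f a) = f a"
  using assms by (auto simp: lin_def)

lemma lin_zero: "lin f \<Longrightarrow> f 0 = 0"
  using linD(2)[of f 0 0] by simp

lemma lin_sum: "lin f \<Longrightarrow> f (\<Sum>i\<in>I. g i) = (\<Sum>i\<in>I. f (g i))"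
  by (induction I rule: infinite_finite_induct) (auto simp: lin_zero linD)

lemma ap_mul: "ap (opmul d L A B) \<psi> = ap A (ap B \<psi>)"
  unfolding ap_def opapp_def opmul_def rv_def
  by (auto simp: fun_eq_iff sum_distrib_left sum_distrib_right mult.assoc intro!: sum.swap[THEN trans] sum.cong)

lemma ap_idop: "ap idop \<psi> = rv \<psi>"
proof -
  have "(\<Sum>t\<in>S. idop s t * \<psi> t) = \<psi> s" if "s \<in> S" for s
  proof -
    have "(\<Sum>t\<in>S. idop s t * \<psi> t) = (\<Sum>t\<in>S. if s = t then \<psi> t else 0)"
      by (rule sum.cong) (auto simp: idop_def)
    also have "\<dots> = \<psi> s" using that by (simp add: finite_cfgs)
    finally show ?thesis .
  qed
  then show ?thesis unfolding ap_def opapp_def rv_def by auto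
qed

lemma ap_zeroop: "ap zeroop \<psi> = 0"
  unfolding ap_def opapp_def zeroop_def rv_def by (auto simp: fun_eq_iff)

lemma ap_compl: "ap (compl_op A) \<psi> = rv \<psi> - ap A \<psi>"
proof -
  have "ap (compl_op A) \<psi> = ap idop \<psi> - ap A \<psi>"
    unfolding ap_def opapp_def compl_op_def rv_def
    by (auto simp: fun_eq_iff algebra_simps sum_subtractf)
  then show ?thesis by (simp add: ap_idop)
qed

lemma opeq_ap: "opeq d L A B \<Longrightarrow> ap A \<psi> = ap B \<psi>"
  unfolding ap_def opapp_def opeq_def rv_def by (auto simp: fun_eq_iff)

lemma nm_def': "nm \<psi> = L2_set (\<lambda>s. cmod (\<psi> s)) S"
  unfolding vnorm_def L2_set_def by simp

lemma nm_cong: "(\<And>s. s \<in> S \<Longrightarrow> f s = g s) \<Longrightarrow> nm f = nm g"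
  unfolding vnorm_def by simp

lemma nm_rv[simp]: "nm (rv f) = nm f" by (rule nm_cong) (simp add: rv_def)
lemma nm_ap: "nm (ap A f) = nm (opapp d L A f)" unfolding ap_def by simp

lemma nm_nonneg: "0 \<le> nm f" unfolding vnorm_def by (simp add: sum_nonneg)

lemma nm_triangle: "nm (a + b) \<le> nm a + nm b"
proof -
  have "nm (a + b) \<le> L2_set (\<lambda>s. cmod (a s) + cmod (b s)) S"
    unfolding nm_def' by (rule L2_set_mono) (auto simp: norm_triangle_ineq)
  also have "\<dots> \<le> nm a + nm b" unfolding nm_def' by (rule L2_set_triangle_ineq)
  finally show ?thesis .
qed

lemma nm_zero[simp]: "nm 0 = 0" unfolding vnorm_def by simp

lemma nm_sum: "nm (\<Sum>i\<in>I. f i) \<le> (\<Sum>i\<in>I. nm (f i))"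
proof (induction I rule: infinite_finite_induct)
  case (insert x F)
  have "nm (sum f (insert x F)) = nm (f x + sum f F)" using insert(1,2) by (intro arg_cong[where f=nm] sum.insert)
  also have "\<dots> \<le> nm (f x) + nm (sum f F)" by (rule nm_triangle)
  also have "\<dots> \<le> nm (f x) + (\<Sum>i\<in>F. nm (f i))" using insert(3) by simp
  also have "\<dots> = (\<Sum>i\<in>insert x F. nm (f i))" using insert(1,2) by (rule sum.insert[symmetric])
  finally show ?case .
qed (auto simp: vnorm_def)

lemma nm_sc: "nm (sc c f) = cmod c * nm f"
  unfolding vnorm_def sc_def by (simp add: norm_mult power_mult_distrib sum_distrib_left[symmetric] real_sqrt_mult)

lemma nm_sq: "(nm f)\<^sup>2 = Re (ip f f)"
proof -
  have "Re (cnj (f s) * f s) = (cmod (f s))\<^sup>2" for s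
    using complex_norm_square[of "f s"] by (metis Re_complex_of_real mult.commute)
  then show ?thesis unfolding vnorm_def ip_def by (simp add: sum_nonneg)
qed



lemma ip_add2: "ip \<phi> (a + b) = ip \<phi> a + ip \<phi> b"
  unfolding ip_def by (simp add: algebra_simps sum.distrib)
lemma ip_diff2: "ip \<phi> (a - b) = ip \<phi> a - ip \<phi> b"
  unfolding ip_def by (simp add: algebra_simps sum_subtractf)
lemma ip_zero2[simp]: "ip \<phi> 0 = 0"
  unfolding ip_def by simp
lemma ip_rv2[simp]: "ip \<phi> (rv \<psi>) = ip \<phi> \<psi>"
  unfolding ip_def rv_def by simp
lemma ip_rv1[simp]: "ip (rv \<phi>) \<psi> = ip \<phi> \<psi>"
  unfolding ip_def rv_def by simp
lemma ip_add1: "ip (a + b) \<phi> = ip a \<phi> + ip b \<phi>"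
  unfolding ip_def by (simp add: algebra_simps sum.distrib)
lemma ip_cnj: "ip b a = cnj (ip a b)"
  unfolding ip_def by (simp add: mult.commute)

lemma nm_add_sq: "(nm (a + b))\<^sup>2 = (nm a)\<^sup>2 + (nm b)\<^sup>2 + 2 * Re (ip a b)"
proof -
  have "ip (a + b) (a + b) = ip a a + ip b b + ip a b + cnj (ip a b)"
    using ip_cnj[of a b] by (simp add: ip_add1 ip_add2)
  then have "Re (ip (a + b) (a + b)) = Re (ip a a) + Re (ip b b) + 2 * Re (ip a b)"
    by simp
  then show ?thesis by (simp add: nm_sq)
qed

lemma sa_ap: assumes "hermitian d L A" shows "sa (ap A)"
  unfolding sa_def
proof (intro allI)
  fix \<phi> \<psi>
  have e1: "cnj (ap A \<phi> s) * \<psi> s = (\<Sum>t\<in>S. cnj (A s t) * cnj (\<phi> t) * \<psi> s)" if "s \<in> S" for s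
  proof -
    have "cnj (ap A \<phi> s) = (\<Sum>t\<in>S. cnj (A s t) * cnj (\<phi> t))"
      using that unfolding ap_def rv_def opapp_def by simp
    then show ?thesis by (simp add: sum_distrib_right)
  qed
  have e2: "cnj (\<phi> t) * ap A \<psi> t = (\<Sum>s\<in>S. cnj (\<phi> t) * (A t s * \<psi> s))" if "t \<in> S" for t
  proof -
    have "ap A \<psi> t = (\<Sum>s\<in>S. A t s * \<psi> s)"
      using that unfolding ap_def rv_def opapp_def by simp
    then show ?thesis by (simp add: sum_distrib_left)
  qed
  have "ip (ap A \<phi>) \<psi> = (\<Sum>s\<in>S. \<Sum>t\<in>S. cnj (A s t) * cnj (\<phi> t) * \<psi> s)"
    unfolding ip_def using e1 by (rule sum.cong[OF refl])
  also have "\<dots> = (\<Sum>t\<in>S. \<Sum>s\<in>S. cnj (A s t) * cnj (\<phi> t) * \<psi> s)"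
    by (rule sum.swap)
  also have "\<dots> = (\<Sum>t\<in>S. \<Sum>s\<in>S. cnj (\<phi> t) * (A t s * \<psi> s))"
  proof (intro sum.cong refl)
    fix t s assume "t \<in> S" "s \<in> S"
    then have "A t s = cnj (A s t)" using assms unfolding hermitian_def by blast
    then show "cnj (A s t) * cnj (\<phi> t) * \<psi> s = cnj (\<phi> t) * (A t s * \<psi> s)" by simp
  qed
  also have "\<dots> = ip \<phi> (ap A \<psi>)"
    unfolding ip_def using e2 by (intro sum.cong[OF refl]) simp
  finally show "ip (ap A \<phi>) \<psi> = ip \<phi> (ap A \<psi>)" .
qed

lemma pythag:
  assumes "lin R" "sa R" "idem R"
  shows "(nm \<phi>)\<^sup>2 = (nm (R \<phi>))\<^sup>2 + (nm (\<phi> - R \<phi>))\<^sup>2"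
proof -
  have 1: "ip (R \<phi>) (\<phi> - R \<phi>) = ip \<phi> (R (\<phi> - R \<phi>))"
    using assms(2) unfolding sa_def by blast
  have 2: "R (\<phi> - R \<phi>) = 0" by (metis assms(1,3) idem_def linD(2) diff_self)
  have 3: "ip (R \<phi>) (\<phi> - R \<phi>) = 0" using 1 2 ip_zero2 by metis
  have 4: "R \<phi> + (\<phi> - R \<phi>) = \<phi>" by (metis add.commute diff_add_cancel)
  show ?thesis using nm_add_sq[of "R \<phi>" "\<phi> - R \<phi>"] 3 4 by simp
qed

lemma ip_all_zero:
  assumes "\<And>\<chi>. ip \<chi> \<phi> = 0" shows "rv \<phi> = 0"
proof -
  have "(nm \<phi>)\<^sup>2 = 0" using assms[of \<phi>] by (simp add: nm_sq)
  then have "\<forall>s\<in>S. cmod (\<phi> s) = 0"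
    unfolding vnorm_def by (simp add: finite_cfgs sum_nonneg_eq_0_iff sum_nonneg)
  then show ?thesis unfolding rv_def by (auto simp: fun_eq_iff)
qed

end


context lat begin

lemma sc_add: "sc c (a + b) = sc c a + sc c b" by (auto simp: sc_def fun_eq_iff algebra_simps)

lemma lin_plus: assumes "lin f" "lin g" shows "lin (\<lambda>\<phi>. f \<phi> + g \<phi>)"
  unfolding lin_def using linD[OF assms(1)] linD[OF assms(2)] by (simp add: rv_add sc_add algebra_simps)

lemma lin_zero_map: "lin (\<lambda>\<phi>. 0)"
  unfolding lin_def by (auto simp: fun_eq_iff rv_def sc_def)

lemma split_sq:
  assumes "lin R" "sa R" "idem R" "\<And>a b. F (a - b) = F a - F b" "\<And>\<phi>. R (F \<phi>) = F (R \<phi>)"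
  shows "(nm (F \<psi>))\<^sup>2 = (nm (F (R \<psi>)))\<^sup>2 + (nm (F (\<psi> - R \<psi>)))\<^sup>2"
  using pythag[OF assms(1-3), of "F \<psi>"] assms(4,5) by simp

lemma sq_le_to_le: "(a::real)\<^sup>2 \<le> b\<^sup>2 \<Longrightarrow> 0 \<le> b \<Longrightarrow> a \<le> b"
  by (rule power2_le_imp_le)

definition cls_hyp :: "real \<Rightarrow> ('i \<Rightarrow> vec \<Rightarrow> vec) \<Rightarrow> ('i \<Rightarrow> vec \<Rightarrow> vec) \<Rightarrow> 'i set \<Rightarrow> bool" where
  "cls_hyp w R V I \<longleftrightarrow> (\<forall>i\<in>I. lin (R i) \<and> sa (R i) \<and> idem (R i)) \<and>
  (\<forall>i\<in>I. \<forall>j\<in>I. comm (R i) (R j)) \<and>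
  (\<forall>i\<in>I. lin (V i) \<and> (\<forall>\<phi>. V i (R i \<phi>) = V i \<phi>) \<and> (\<forall>\<phi>. R i (V i \<phi>) = V i \<phi>) \<and> (\<forall>\<phi>. nm (V i \<phi>) \<le> w * nm \<phi>)) \<and>
  (\<forall>i\<in>I. \<forall>j\<in>I. i \<noteq> j \<longrightarrow> comm (V i) (R j))"

lemma class_bound:
  fixes R V :: "'i \<Rightarrow> vec \<Rightarrow> vec"
  assumes "finite I"
  shows "cls_hyp w R V I \<Longrightarrow> 0 \<le> w \<Longrightarrow> lin U \<Longrightarrow> \<forall>i\<in>I. comm U (R i) \<Longrightarrow> (\<forall>\<phi>. nm (U \<phi>) \<le> c * w * nm \<phi>) \<Longrightarrow> 0 \<le> c \<Longrightarrow>
     nm ((\<Sum>i\<in>I. V i \<psi>) + U \<psi>) \<le> w * nm ((\<Sum>i\<in>I. R i \<psi>) + sc (of_real c) \<psi>)"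
  using assms
proof (induction I arbitrary: U c \<psi> rule: finite_induct)
  case empty
  have "nm ((\<Sum>i\<in>{}. V i \<psi>) + U \<psi>) = nm (U \<psi>)" by simp
  also have "\<dots> \<le> c * w * nm \<psi>" using empty(5) by blast
  also have "\<dots> = w * nm ((\<Sum>i\<in>{}. R i \<psi>) + sc (of_real c) \<psi>)"
    using empty(6) by (simp add: nm_sc)
  finally show ?case .
next
  case (insert k I)
  have hR: "\<forall>i\<in>insert k I. lin (R i) \<and> sa (R i) \<and> idem (R i)" and hRR: "\<forall>i\<in>insert k I. \<forall>j\<in>insert k I. comm (R i) (R j)"
    and hV: "\<forall>i\<in>insert k I. lin (V i) \<and> (\<forall>\<phi>. V i (R i \<phi>) = V i \<phi>) \<and> (\<forall>\<phi>. R i (V i \<phi>) = V i \<phi>) \<and> (\<forall>\<phi>. nm (V i \<phi>) \<le> w * nm \<phi>)"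
    and hVR: "\<forall>i\<in>insert k I. \<forall>j\<in>insert k I. i \<noteq> j \<longrightarrow> comm (V i) (R j)"
    using insert.prems(1) unfolding cls_hyp_def by auto
  have linU: "lin U" by (rule insert.prems(3))
  have hyp': "cls_hyp w R V I" using insert.prems(1) unfolding cls_hyp_def by auto
  have Rk: "lin (R k)" "sa (R k)" "idem (R k)" using hR by auto
  have Vk: "lin (V k)" "\<And>\<phi>. V k (R k \<phi>) = V k \<phi>" "\<And>\<phi>. R k (V k \<phi>) = V k \<phi>" "\<And>\<phi>. nm (V k \<phi>) \<le> w * nm \<phi>"
    using hV by auto
  define X where "X = (\<lambda>\<phi>. (\<Sum>i\<in>insert k I. V i \<phi>) + U \<phi>)"
  define Y where "Y = (\<lambda>\<phi>. (\<Sum>i\<in>insert k I. R i \<phi>) + sc (of_real c) \<phi>)"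
  define \<psi>1 where "\<psi>1 = R k \<psi>"
  define \<psi>0 where "\<psi>0 = \<psi> - R k \<psi>"
  have linV: "\<And>i. i \<in> insert k I \<Longrightarrow> lin (V i)" using hV by auto
  have linR: "\<And>i. i \<in> insert k I \<Longrightarrow> lin (R i)" using hR by auto
  have Xd: "X (a - b) = X a - X b" for a b
  proof -
    have "X (a - b) = (\<Sum>i\<in>insert k I. V i a - V i b) + (U a - U b)"
      unfolding X_def using linD(2)[OF linV] linD(2)[OF linU]
      by (intro arg_cong2[where f="(+)"] sum.cong) auto
    then show ?thesis unfolding X_def by (simp only: sum_subtractf) (simp add: algebra_simps)
  qed
  have Yd: "Y (a - b) = Y a - Y b" for a b
  proof -
    have "sc (of_real c) (a - b) = sc (of_real c) a - sc (of_real c) b"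
      by (auto simp: sc_def fun_eq_iff algebra_simps)
    then show ?thesis
      unfolding Y_def using linD(2)[OF linR] by (simp add: sum_subtractf)
  qed
  have Xc: "R k (X \<phi>) = X (R k \<phi>)" for \<phi>
  proof -
    have "R k (X \<phi>) = (\<Sum>i\<in>insert k I. R k (V i \<phi>)) + R k (U \<phi>)"
      unfolding X_def using Rk(1) by (simp add: linD(1) lin_sum fun_eq_iff)
    also have "\<dots> = (\<Sum>i\<in>insert k I. V i (R k \<phi>)) + U (R k \<phi>)"
    proof -
      have "R k (V i \<phi>) = V i (R k \<phi>)" if "i \<in> insert k I" for i
      proof (cases "i = k")
        case True then show ?thesis using Vk by simp
      next
        case False then show ?thesis using hVR that by (auto simp: comm_def)
      qed
      moreover have "R k (U \<phi>) = U (R k \<phi>)" using insert.prems(4) by (auto simp: comm_def)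
      ultimately show ?thesis by simp
    qed
    finally show ?thesis unfolding X_def .
  qed
  have Yc: "R k (Y \<phi>) = Y (R k \<phi>)" for \<phi>
  proof -
    have "R k (Y \<phi>) = (\<Sum>i\<in>insert k I. R k (R i \<phi>)) + R k (sc (of_real c) \<phi>)"
      unfolding Y_def using Rk(1) by (simp add: linD(1) lin_sum fun_eq_iff)
    also have "\<dots> = (\<Sum>i\<in>insert k I. R i (R k \<phi>)) + sc (of_real c) (R k \<phi>)"
      using hRR Rk(1) by (intro arg_cong2[where f="(+)"] sum.cong) (auto simp: comm_def linD(3))
    finally show ?thesis unfolding Y_def .
  qed
  have sX: "(nm (X \<psi>))\<^sup>2 = (nm (X \<psi>1))\<^sup>2 + (nm (X \<psi>0))\<^sup>2"
    unfolding \<psi>1_def \<psi>0_def by (rule split_sq[OF Rk Xd Xc])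
  have sY: "(nm (Y \<psi>))\<^sup>2 = (nm (Y \<psi>1))\<^sup>2 + (nm (Y \<psi>0))\<^sup>2"
    unfolding \<psi>1_def \<psi>0_def by (rule split_sq[OF Rk Yd Yc])
  have Rk1: "R k \<psi>1 = \<psi>1" using Rk(3) by (simp add: idem_def \<psi>1_def)
  have Rk0: "R k \<psi>0 = 0" using Rk by (metis \<psi>0_def idem_def linD(2) diff_self)
  have Vk0: "V k \<psi>0 = 0" using Vk by (metis \<psi>0_def linD(2) diff_self)
  define U' where "U' = (\<lambda>\<phi>. V k \<phi> + U \<phi>)"
  have X1: "X \<psi>1 = (\<Sum>i\<in>I. V i \<psi>1) + U' \<psi>1"
    unfolding X_def U'_def using insert(1,2) by (simp add: algebra_simps)
  have X0: "X \<psi>0 = (\<Sum>i\<in>I. V i \<psi>0) + U \<psi>0"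
    unfolding X_def using insert(1,2) Vk0 by simp
  have Y1: "Y \<psi>1 = (\<Sum>i\<in>I. R i \<psi>1) + sc (of_real (c + 1)) \<psi>1"
  proof -
    have "sc (of_real (c + 1)) \<psi>1 = \<psi>1 + sc (of_real c) \<psi>1"
      by (auto simp: sc_def fun_eq_iff algebra_simps)
    then show ?thesis
      unfolding Y_def using insert(1,2) Rk1 by (simp add: algebra_simps)
  qed
  have Y0: "Y \<psi>0 = (\<Sum>i\<in>I. R i \<psi>0) + sc (of_real c) \<psi>0"
    unfolding Y_def using insert(1,2) Rk0 by simp
  have IH1: "nm (X \<psi>1) \<le> w * nm (Y \<psi>1)"
    unfolding X1 Y1
  proof (rule insert.IH)
    show "lin U'" unfolding U'_def by (rule lin_plus[OF Vk(1) insert.prems(3)])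
    show "\<forall>i\<in>I. comm U' (R i)"
      using insert.prems(4) hVR insert(2) unfolding U'_def comm_def
      by (auto simp: linD(1)[OF linR])
    show "\<forall>\<phi>. nm (U' \<phi>) \<le> (c + 1) * w * nm \<phi>"
    proof
      fix \<phi>
      have "nm (U' \<phi>) \<le> nm (V k \<phi>) + nm (U \<phi>)" unfolding U'_def by (rule nm_triangle)
      also have "\<dots> \<le> w * nm \<phi> + c * w * nm \<phi>" using Vk(4) insert.prems(5) by (intro add_mono) auto
      finally show "nm (U' \<phi>) \<le> (c + 1) * w * nm \<phi>" by (simp add: algebra_simps)
    qed
    show "0 \<le> c + 1" using insert.prems(6) by simp
  qed (use hyp' insert.prems in auto)
  have IH0: "nm (X \<psi>0) \<le> w * nm (Y \<psi>0)"
    unfolding X0 Y0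
    by (rule insert.IH) (use hyp' insert.prems in auto)
  have "(nm (X \<psi>))\<^sup>2 \<le> (w * nm (Y \<psi>))\<^sup>2"
  proof -
    have "(nm (X \<psi>1))\<^sup>2 \<le> (w * nm (Y \<psi>1))\<^sup>2" using IH1 nm_nonneg by (simp add: power_mono)
    moreover have "(nm (X \<psi>0))\<^sup>2 \<le> (w * nm (Y \<psi>0))\<^sup>2" using IH0 nm_nonneg by (simp add: power_mono)
    ultimately show ?thesis using sX sY by (simp add: power_mult_distrib algebra_simps)
  qed
  then have "nm (X \<psi>) \<le> w * nm (Y \<psi>)"
    by (rule sq_le_to_le) (use insert.prems(2) nm_nonneg in simp)
  then show ?case unfolding X_def Y_def .
qed

end


context lat begin

primrec Pl :: "('j \<Rightarrow> vec \<Rightarrow> vec) \<Rightarrow> 'j list \<Rightarrow> vec \<Rightarrow> vec" where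
  "Pl q [] \<psi> = rv \<psi>"
| "Pl q (j # l) \<psi> = rv (Pl q l \<psi>) - q j (Pl q l \<psi>)"

lemma lin_diff_map: assumes "lin f" "lin g" shows "lin (\<lambda>\<phi>. f \<phi> - g \<phi>)"
proof -
  have "sc c (a - b) = sc c a - sc c b" for c a b by (auto simp: sc_def fun_eq_iff algebra_simps)
  then show ?thesis
    unfolding lin_def using linD[OF assms(1)] linD[OF assms(2)] by (simp add: rv_add rv_diff algebra_simps)
qed

lemma lin_comp: assumes "lin f" "lin g" shows "lin (\<lambda>\<phi>. f (g \<phi>))"
  unfolding lin_def using linD[OF assms(1)] linD[OF assms(2)] by simp

lemma lin_Pl: "\<forall>i\<in>set l. lin (q i) \<Longrightarrow> lin (Pl q l)"
proof (induction l)
  case Nil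
  then show ?case using lin_rv by simp
next
  case (Cons j l)
  have "lin (\<lambda>\<phi>. rv (Pl q l \<phi>) - q j (Pl q l \<phi>))"
    by (rule lin_diff_map[OF lin_comp[OF lin_rv] lin_comp]) (use Cons in auto)
  moreover have "Pl q (j # l) = (\<lambda>\<phi>. rv (Pl q l \<phi>) - q j (Pl q l \<phi>))" by (rule ext) simp
  ultimately show ?case by (simp only:)
qed

lemma comm_Pl: "lin h \<Longrightarrow> \<forall>i\<in>set l. comm h (q i) \<Longrightarrow> \<forall>i\<in>set l. lin (q i) \<Longrightarrow> h (Pl q l \<psi>) = Pl q l (h \<psi>)"
proof (induction l arbitrary: \<psi>)
  case Nil
  then show ?case by (simp add: linD(4,5)[OF Nil.prems(1)])
next
  case (Cons j l)
  have "h (Pl q (j # l) \<psi>) = rv (h (Pl q l \<psi>)) - q j (h (Pl q l \<psi>))"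
    using Cons.prems by (simp add: linD(2,4,5)[OF Cons.prems(1)] comm_def)
  also have "\<dots> = Pl q (j # l) (h \<psi>)" using Cons by simp
  finally show ?case .
qed

lemma idem_Pl: "\<forall>i\<in>set l. lin (q i) \<and> idem (q i) \<Longrightarrow> \<forall>i\<in>set l. \<forall>i'\<in>set l. comm (q i) (q i') \<Longrightarrow> Pl q l (Pl q l \<psi>) = Pl q l \<psi>"
proof (induction l arbitrary: \<psi>)
  case Nil
  then show ?case by simp
next
  case (Cons j l)
  have linl: "lin (Pl q l)" using Cons.prems by (intro lin_Pl) auto
  have linj: "lin (q j)" and idj: "idem (q j)" using Cons.prems by auto
  have cj: "q j (Pl q l \<phi>) = Pl q l (q j \<phi>)" for \<phi>
    by (rule comm_Pl) (use Cons.prems linj in auto)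
  define \<chi> where "\<chi> = Pl q l \<psi>"
  have r\<chi>: "rv \<chi> = \<chi>" using linl by (simp add: \<chi>_def linD(5))
  have "Pl q (j # l) (Pl q (j # l) \<psi>) = rv (Pl q l (\<chi> - q j \<chi>)) - q j (Pl q l (\<chi> - q j \<chi>))"
    using r\<chi> by (simp add: \<chi>_def)
  also have "Pl q l (\<chi> - q j \<chi>) = \<chi> - q j \<chi>"
  proof -
    have "Pl q l (\<chi> - q j \<chi>) = Pl q l \<chi> - Pl q l (q j \<chi>)" by (rule linD(2)[OF linl])
    also have "Pl q l (q j \<chi>) = q j (Pl q l \<chi>)" using cj by simp
    also have "Pl q l \<chi> = \<chi>" using Cons.IH Cons.prems by (simp add: \<chi>_def)
    finally show ?thesis .
  qed
  also have "rv (\<chi> - q j \<chi>) - q j (\<chi> - q j \<chi>) = \<chi> - q j \<chi>"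
    using idj r\<chi> by (simp add: linD(2,5)[OF linj] rv_diff idem_def)
  finally have calc: "Pl q (j # l) (Pl q (j # l) \<psi>) = \<chi> - q j \<chi>" .
  have e: "Pl q (j # l) \<psi> = \<chi> - q j \<chi>" using r\<chi> by (simp add: \<chi>_def)
  show ?case by (rule trans[OF calc e[symmetric]])
qed

lemma sa_Pl: "\<forall>i\<in>set l. lin (q i) \<and> sa (q i) \<Longrightarrow> \<forall>i\<in>set l. \<forall>i'\<in>set l. comm (q i) (q i') \<Longrightarrow> sa (Pl q l)"
proof (induction l)
  case Nil
  then show ?case by (simp add: sa_def)
next
  case (Cons j l)
  have linl: "lin (Pl q l)" using Cons.prems by (intro lin_Pl) auto
  have linj: "lin (q j)" and saj: "sa (q j)" using Cons.prems by auto
  have sal: "sa (Pl q l)" using Cons by auto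
  have cj: "q j (Pl q l \<phi>) = Pl q l (q j \<phi>)" for \<phi>
    by (rule comm_Pl) (use Cons.prems linj in auto)
  show ?case unfolding sa_def
  proof (intro allI)
    fix \<phi> \<psi>
    have "ip (Pl q (j # l) \<phi>) \<psi> = ip (Pl q l \<phi>) \<psi> - ip (q j (Pl q l \<phi>)) \<psi>"
      using linl by (simp add: linD(5)[OF linl] ip_def sum_subtractf algebra_simps)
    also have "\<dots> = ip \<phi> (Pl q l \<psi>) - ip \<phi> (Pl q l (q j \<psi>))"
      using sal saj by (simp add: sa_def)
    also have "\<dots> = ip \<phi> (Pl q (j # l) \<psi>)"
      using linl by (simp add: linD(5)[OF linl] ip_diff2 cj)
    finally show "ip (Pl q (j # l) \<phi>) \<psi> = ip \<phi> (Pl q (j # l) \<psi>)" .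
  qed
qed

end


context lat begin

definition Xf :: "('j \<Rightarrow> vec \<Rightarrow> vec) \<Rightarrow> 'j list list \<Rightarrow> real \<Rightarrow> vec \<Rightarrow> vec" where
  "Xf q Ls a \<psi> = sum_list (map (\<lambda>l. rv \<psi> - Pl q l \<psi>) Ls) + sc (of_real a) \<psi>"
definition Yf :: "('j \<Rightarrow> vec \<Rightarrow> vec) \<Rightarrow> 'j list \<Rightarrow> real \<Rightarrow> vec \<Rightarrow> vec" where
  "Yf q js b \<psi> = sum_list (map (\<lambda>j. q j \<psi>) js) + sc (of_real b) \<psi>"

lemma sum_list_map_diff:
  "(\<And>x. x \<in> set xs \<Longrightarrow> f x (a - b) = f x a - f x b) \<Longrightarrow>
   sum_list (map (\<lambda>x. f x (a - b)) xs) = sum_list (map (\<lambda>x. f x a) xs) - (sum_list (map (\<lambda>x. f x b) xs) :: vec)"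
  by (induction xs) (auto simp: algebra_simps)

lemma lin_sum_list: "lin f \<Longrightarrow> f (sum_list (map g xs)) = sum_list (map (\<lambda>x. f (g x)) xs)"
  by (induction xs) (auto simp: linD(1) lin_zero)

lemma sc_diff: "sc c (a - b) = sc c a - sc c b" by (auto simp: sc_def fun_eq_iff algebra_simps)

lemma Xf_diff:
  assumes "\<forall>i\<in>set (concat Ls). lin (q i)"
  shows "Xf q Ls a (x - y) = Xf q Ls a x - Xf q Ls a y"
proof -
  have "sum_list (map (\<lambda>l. rv (x - y) - Pl q l (x - y)) Ls) =
        sum_list (map (\<lambda>l. rv x - Pl q l x) Ls) - sum_list (map (\<lambda>l. rv y - Pl q l y) Ls)"
  proof (rule sum_list_map_diff[where f="\<lambda>l z. rv z - Pl q l z" and a=x and b=y, simplified])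
    fix l assume "l \<in> set Ls"
    then have "lin (Pl q l)" using assms by (intro lin_Pl) auto
    then show "rv (x - y) - Pl q l (x - y) = (rv x - Pl q l x) - (rv y - Pl q l y)"
      by (simp add: linD(2)[of "Pl q l"] rv_diff)
  qed
  then show ?thesis unfolding Xf_def by (simp add: sc_diff)
qed

lemma Yf_diff:
  assumes "\<forall>i\<in>set js. lin (q i)"
  shows "Yf q js b (x - y) = Yf q js b x - Yf q js b y"
proof -
  have "sum_list (map (\<lambda>j. q j (x - y)) js) = sum_list (map (\<lambda>j. q j x) js) - sum_list (map (\<lambda>j. q j y) js)"
    by (rule sum_list_map_diff[where f="\<lambda>j z. q j z" and a=x and b=y]) (use assms linD(2) in blast)
  then show ?thesis unfolding Yf_def by (simp add: sc_diff)
qed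

lemma Xf_comm:
  assumes "lin Q" "\<forall>i\<in>set (concat Ls). lin (q i) \<and> comm Q (q i)"
  shows "Q (Xf q Ls a x) = Xf q Ls a (Q x)"
proof -
  have "Q (Xf q Ls a x) = sum_list (map (\<lambda>l. Q (rv x - Pl q l x)) Ls) + Q (sc (of_real a) x)"
    unfolding Xf_def by (simp add: linD(1)[OF assms(1)] lin_sum_list[OF assms(1)])
  also have "\<dots> = sum_list (map (\<lambda>l. rv (Q x) - Pl q l (Q x)) Ls) + sc (of_real a) (Q x)"
  proof -
    have "Q (rv x - Pl q l x) = rv (Q x) - Pl q l (Q x)" if "l \<in> set Ls" for l
    proof -
      have "Q (Pl q l x) = Pl q l (Q x)" by (rule comm_Pl) (use assms that in auto)
      then show ?thesis by (simp add: linD(2,4,5)[OF assms(1)])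
    qed
    then show ?thesis by (simp add: linD(3)[OF assms(1)] cong: map_cong)
  qed
  finally show ?thesis unfolding Xf_def .
qed

lemma Yf_comm:
  assumes "lin Q" "\<forall>i\<in>set js. comm Q (q i)"
  shows "Q (Yf q js b x) = Yf q js b (Q x)"
proof -
  have "Q (Yf q js b x) = sum_list (map (\<lambda>j. Q (q j x)) js) + Q (sc (of_real b) x)"
    unfolding Yf_def by (simp add: linD(1)[OF assms(1)] lin_sum_list[OF assms(1)])
  also have "\<dots> = sum_list (map (\<lambda>j. q j (Q x)) js) + sc (of_real b) (Q x)"
    using assms(2) by (simp add: linD(3)[OF assms(1)] comm_def cong: map_cong)
  finally show ?thesis unfolding Yf_def .
qed

lemma combine:
  assumes "lin Q" "sa Q" "idem Q"
    "\<And>x y. F (x - y) = F x - F y" "\<And>x. Q (F x) = F (Q x)"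
    "\<And>x y. H (x - y) = H x - H y" "\<And>x. Q (H x) = H (Q x)"
    "nm (F (Q \<psi>)) \<le> nm (H (Q \<psi>))" "nm (F (\<psi> - Q \<psi>)) \<le> nm (H (\<psi> - Q \<psi>))"
  shows "nm (F \<psi>) \<le> nm (H \<psi>)"
proof -
  have "(nm (F \<psi>))\<^sup>2 = (nm (F (Q \<psi>)))\<^sup>2 + (nm (F (\<psi> - Q \<psi>)))\<^sup>2"
    by (rule split_sq[OF assms(1-5)])
  also have "\<dots> \<le> (nm (H (Q \<psi>)))\<^sup>2 + (nm (H (\<psi> - Q \<psi>)))\<^sup>2"
    using assms(8,9) nm_nonneg by (intro add_mono power_mono) auto
  also have "\<dots> = (nm (H \<psi>))\<^sup>2"
    by (rule split_sq[OF assms(1-3) assms(6,7), symmetric])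
  finally show ?thesis by (rule sq_le_to_le) (rule nm_nonneg)
qed


lemma list_bound:
  fixes q :: "'j \<Rightarrow> vec \<Rightarrow> vec"
  assumes G1: "\<forall>i\<in>G. lin (q i) \<and> sa (q i) \<and> idem (q i)" and G2: "\<forall>i\<in>G. \<forall>j\<in>G. comm (q i) (q j)"
  shows "\<forall>Ls E a b \<psi>. length (concat Ls @ E) = n \<longrightarrow> set (concat Ls @ E) \<subseteq> G \<longrightarrow> 0 \<le> a \<longrightarrow> a \<le> b \<longrightarrow>
     nm (Xf q Ls a \<psi>) \<le> nm (Yf q (concat Ls @ E) b \<psi>)"
proof (induction n)
  case 0
  show ?case
  proof (intro allI impI)
    fix Ls :: "'j list list" and E :: "'j list" and a b :: real and \<psi> :: vec
    assume h: "length (concat Ls @ E) = 0" "0 \<le> a" "a \<le> b"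
    have "map (\<lambda>l. rv \<psi> - Pl q l \<psi>) Ls = map (\<lambda>l. 0) Ls"
      using h(1) by (intro map_cong) auto
    moreover have "sum_list (map (\<lambda>l. 0::vec) Ls) = 0" by (induction Ls) auto
    ultimately have "Xf q Ls a \<psi> = sc (of_real a) \<psi>" unfolding Xf_def by (simp only:) simp
    moreover have "Yf q (concat Ls @ E) b \<psi> = sc (of_real b) \<psi>"
    proof -
      have c: "concat Ls = []" and e: "E = []" using h(1) by auto
      show ?thesis unfolding Yf_def c e by simp
    qed
    ultimately show "nm (Xf q Ls a \<psi>) \<le> nm (Yf q (concat Ls @ E) b \<psi>)"
      using h(2,3) nm_nonneg by (simp add: nm_sc mult_right_mono)
  qed
next
  case (Suc m)
  show ?case
  proof (intro allI impI)
    fix Ls :: "'j list list" and E :: "'j list" and a b :: real and \<psi> :: vec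
    assume h: "length (concat Ls @ E) = Suc m" "set (concat Ls @ E) \<subseteq> G" "0 \<le> a" "a \<le> b"
    have linq: "\<And>i. i \<in> G \<Longrightarrow> lin (q i)" using G1 by auto
    have XD: "Xf q Ls' a' (x - y) = Xf q Ls' a' x - Xf q Ls' a' y" if "set (concat Ls') \<subseteq> G" for Ls' a' x y
      by (rule Xf_diff) (use that linq in auto)
    have YD: "Yf q js b' (x - y) = Yf q js b' x - Yf q js b' y" if "set js \<subseteq> G" for js b' x y
      by (rule Yf_diff) (use that linq in auto)
    have XC: "q j (Xf q Ls' a' x) = Xf q Ls' a' (q j x)" if "set (concat Ls') \<subseteq> G" "j \<in> G" for Ls' a' x j
      by (rule Xf_comm) (use that linq G2 in auto)
    have YC: "q j (Yf q js b' x) = Yf q js b' (q j x)" if "set js \<subseteq> G" "j \<in> G" for js b' x j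
      by (rule Yf_comm) (use that linq G2 in auto)
    show "nm (Xf q Ls a \<psi>) \<le> nm (Yf q (concat Ls @ E) b \<psi>)"
    proof (cases "concat Ls = []")
      case False
      then obtain l0 where l0: "l0 \<in> set Ls" "l0 \<noteq> []" by auto
      then obtain Ls1 Ls2 where LS: "Ls = Ls1 @ l0 # Ls2" by (meson split_list)
      obtain j l where jl: "l0 = j # l" using l0(2) by (cases l0) auto
      have "j \<in> set (concat Ls)" using l0(1) jl by (metis concat.simps(2) in_set_conv_decomp list.set_intros(1) set_append UnI1 UnI2 concat_append)
      then have jG: "j \<in> G" using h(2) by auto
      have Qj: "lin (q j)" "sa (q j)" "idem (q j)" using G1 jG by auto
      have lG: "set l \<subseteq> G" using h(2) LS jl by auto
      have linPl: "lin (Pl q l)" using lG linq by (intro lin_Pl) auto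
      have cPl: "q j (Pl q l x) = Pl q l (q j x)" for x
        by (rule comm_Pl) (use Qj lG G2 jG linq in auto)
      define \<psi>1 where "\<psi>1 = q j \<psi>"
      define \<psi>0 where "\<psi>0 = \<psi> - q j \<psi>"
      have q1: "q j \<psi>1 = \<psi>1" using Qj(3) by (simp add: idem_def \<psi>1_def)
      have r1: "rv \<psi>1 = \<psi>1" using Qj(1) by (simp add: linD(5)[OF Qj(1)] \<psi>1_def)
      have q0: "q j \<psi>0 = 0" using Qj by (metis \<psi>0_def idem_def linD(2) diff_self)
      have P1: "Pl q (j # l) \<psi>1 = 0"
        using cPl[of \<psi>1] q1 by (simp add: linD(5)[OF linPl])
      have P0: "Pl q (j # l) \<psi>0 = Pl q l \<psi>0"
        using cPl[of \<psi>0] q0 by (simp add: linD(5)[OF linPl] lin_zero[OF linPl])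
      have X1: "Xf q Ls a \<psi>1 = Xf q (Ls1 @ Ls2) (a + 1) \<psi>1"
      proof -
        have "sc (of_real (a + 1)) \<psi>1 = \<psi>1 + sc (of_real a) \<psi>1" by (auto simp: sc_def fun_eq_iff algebra_simps)
        then show ?thesis unfolding Xf_def LS jl using P1 r1 by (simp add: algebra_simps)
      qed
      have Y1: "Yf q (concat Ls @ E) b \<psi>1 = Yf q (concat (Ls1 @ Ls2) @ (l @ E)) (b + 1) \<psi>1"
      proof -
        have "sc (of_real (b + 1)) \<psi>1 = \<psi>1 + sc (of_real b) \<psi>1" by (auto simp: sc_def fun_eq_iff algebra_simps)
        then show ?thesis unfolding Yf_def LS jl using q1 by (simp add: algebra_simps)
      qed
      have X0: "Xf q Ls a \<psi>0 = Xf q (Ls1 @ l # Ls2) a \<psi>0"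
        unfolding Xf_def LS jl using P0 by simp
      have Y0: "Yf q (concat Ls @ E) b \<psi>0 = Yf q (concat (Ls1 @ l # Ls2) @ E) b \<psi>0"
        unfolding Yf_def LS jl using q0 by (simp add: algebra_simps)
      have IH1: "nm (Xf q (Ls1 @ Ls2) (a + 1) \<psi>1) \<le> nm (Yf q (concat (Ls1 @ Ls2) @ (l @ E)) (b + 1) \<psi>1)"
        using Suc.IH[rule_format, of "Ls1 @ Ls2" "l @ E" "a + 1" "b + 1" \<psi>1] h LS jl jG by auto
      have IH0: "nm (Xf q (Ls1 @ l # Ls2) a \<psi>0) \<le> nm (Yf q (concat (Ls1 @ l # Ls2) @ E) b \<psi>0)"
        using Suc.IH[rule_format, of "Ls1 @ l # Ls2" E a b \<psi>0] h LS jl by auto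
      have sLs: "set (concat Ls) \<subseteq> G" using h(2) by auto
      show ?thesis
      proof (rule combine[OF Qj, where F="Xf q Ls a" and H="Yf q (concat Ls @ E) b"])
        show "Xf q Ls a (x - y) = Xf q Ls a x - Xf q Ls a y" for x y by (rule XD[OF sLs])
        show "q j (Xf q Ls a x) = Xf q Ls a (q j x)" for x by (rule XC[OF sLs jG])
        show "Yf q (concat Ls @ E) b (x - y) = Yf q (concat Ls @ E) b x - Yf q (concat Ls @ E) b y" for x y by (rule YD[OF h(2)])
        show "q j (Yf q (concat Ls @ E) b x) = Yf q (concat Ls @ E) b (q j x)" for x by (rule YC[OF h(2) jG])
        show "nm (Xf q Ls a (q j \<psi>)) \<le> nm (Yf q (concat Ls @ E) b (q j \<psi>))"
          using IH1 X1 Y1 by (simp add: \<psi>1_def)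
        show "nm (Xf q Ls a (\<psi> - q j \<psi>)) \<le> nm (Yf q (concat Ls @ E) b (\<psi> - q j \<psi>))"
          using IH0 X0 Y0 by (simp add: \<psi>0_def)
      qed
    next
      case True
      have "length E = Suc m" using h(1) by (simp only: length_append True list.size(3) add_0)
      then obtain j E' where jE: "E = j # E'" by (cases E) auto
      have jG: "j \<in> G" using h(2) jE by auto
      have Qj: "lin (q j)" "sa (q j)" "idem (q j)" using G1 jG by auto
      define \<psi>1 where "\<psi>1 = q j \<psi>"
      define \<psi>0 where "\<psi>0 = \<psi> - q j \<psi>"
      have q1: "q j \<psi>1 = \<psi>1" using Qj(3) by (simp add: idem_def \<psi>1_def)
      have q0: "q j \<psi>0 = 0" using Qj by (metis \<psi>0_def idem_def linD(2) diff_self)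
      have Y1: "Yf q (concat Ls @ E) b \<psi>1 = Yf q (concat Ls @ E') (b + 1) \<psi>1"
      proof -
        have "sc (of_real (b + 1)) \<psi>1 = \<psi>1 + sc (of_real b) \<psi>1" by (auto simp: sc_def fun_eq_iff algebra_simps)
        then show ?thesis unfolding Yf_def jE using q1 True by (simp add: algebra_simps)
      qed
      have Y0: "Yf q (concat Ls @ E) b \<psi>0 = Yf q (concat Ls @ E') b \<psi>0"
        unfolding Yf_def jE using q0 True by simp
      have IH1: "nm (Xf q Ls a \<psi>1) \<le> nm (Yf q (concat Ls @ E') (b + 1) \<psi>1)"
        using Suc.IH[rule_format, of Ls E' a "b + 1" \<psi>1] h jE by auto
      have IH0: "nm (Xf q Ls a \<psi>0) \<le> nm (Yf q (concat Ls @ E') b \<psi>0)"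
        using Suc.IH[rule_format, of Ls E' a b \<psi>0] h jE by auto
      have sLs: "set (concat Ls) \<subseteq> G" using h(2) by auto
      show ?thesis
      proof (rule combine[OF Qj, where F="Xf q Ls a" and H="Yf q (concat Ls @ E) b"])
        show "Xf q Ls a (x - y) = Xf q Ls a x - Xf q Ls a y" for x y by (rule XD[OF sLs])
        show "q j (Xf q Ls a x) = Xf q Ls a (q j x)" for x by (rule XC[OF sLs jG])
        show "Yf q (concat Ls @ E) b (x - y) = Yf q (concat Ls @ E) b x - Yf q (concat Ls @ E) b y" for x y by (rule YD[OF h(2)])
        show "q j (Yf q (concat Ls @ E) b x) = Yf q (concat Ls @ E) b (q j x)" for x by (rule YC[OF h(2) jG])
        show "nm (Xf q Ls a (q j \<psi>)) \<le> nm (Yf q (concat Ls @ E) b (q j \<psi>))"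
          using IH1 Y1 by (simp add: \<psi>1_def)
        show "nm (Xf q Ls a (\<psi> - q j \<psi>)) \<le> nm (Yf q (concat Ls @ E) b (\<psi> - q j \<psi>))"
          using IH0 Y0 by (simp add: \<psi>0_def)
      qed
    qed
  qed
qed

end


context lat begin

lemma sum_single:
  assumes "finite A" "x \<in> A" "\<And>y. y \<in> A \<Longrightarrow> y \<noteq> x \<Longrightarrow> f y = (0::complex)"
  shows "sum f A = f x"
proof -
  have "sum f A = f x + sum f (A - {x})" using assms(1,2) by (rule sum.remove)
  also have "sum f (A - {x}) = 0" using assms(3) by (intro sum.neutral) auto
  finally show ?thesis by simp
qed

lemma mix_cfgs: "s \<in> S \<Longrightarrow> t \<in> S \<Longrightarrow> (\<lambda>u. if u \<in> X then t u else s u) \<in> S"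
  unfolding cfgs_def by auto

lemma supp_comm_op:
  assumes A: "supported d L X A" and B: "supported d L Y B" and XY: "X \<inter> Y = {}"
  shows "opeq d L (opmul d L A B) (opmul d L B A)"
  unfolding opeq_def
proof (intro ballI)
  fix s t assume s: "s \<in> S" and t: "t \<in> S"
  define m1 where "m1 = (\<lambda>u. if u \<in> X then t u else s u)"
  define m2 where "m2 = (\<lambda>u. if u \<in> Y then t u else s u)"
  have m1S: "m1 \<in> S" unfolding m1_def by (rule mix_cfgs[OF s t])
  have m2S: "m2 \<in> S" unfolding m2_def by (rule mix_cfgs[OF s t])
  have A0: "\<And>a b. a \<in> S \<Longrightarrow> b \<in> S \<Longrightarrow> \<not> agree_off X a b \<Longrightarrow> A a b = 0" using A unfolding supported_def by blast
  have B0: "\<And>a b. a \<in> S \<Longrightarrow> b \<in> S \<Longrightarrow> \<not> agree_off Y a b \<Longrightarrow> B a b = 0" using B unfolding supported_def by blast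
  have A1: "\<And>a b a' b'. a \<in> S \<Longrightarrow> b \<in> S \<Longrightarrow> a' \<in> S \<Longrightarrow> b' \<in> S \<Longrightarrow> agree_off X a b \<Longrightarrow> agree_off X a' b' \<Longrightarrow>
      (\<forall>u\<in>X. a u = a' u \<and> b u = b' u) \<Longrightarrow> A a b = A a' b'" using A unfolding supported_def by blast
  have B1: "\<And>a b a' b'. a \<in> S \<Longrightarrow> b \<in> S \<Longrightarrow> a' \<in> S \<Longrightarrow> b' \<in> S \<Longrightarrow> agree_off Y a b \<Longrightarrow> agree_off Y a' b' \<Longrightarrow>
      (\<forall>u\<in>Y. a u = a' u \<and> b u = b' u) \<Longrightarrow> B a b = B a' b'" using B unfolding supported_def by blast
  have e1: "opmul d L A B s t = A s m1 * B m1 t"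
    unfolding opmul_def
  proof (rule sum_single[OF finite_cfgs m1S])
    fix m assume mS: "m \<in> S" and ne: "m \<noteq> m1"
    show "A s m * B m t = 0"
    proof (cases "agree_off X s m \<and> agree_off Y m t")
      case True
      then have "m = m1" using XY unfolding m1_def agree_off_def by (intro ext) (metis disjoint_iff)
      then show ?thesis using ne by simp
    next
      case False
      then show ?thesis using A0[OF s mS] B0[OF mS t] by auto
    qed
  qed
  have e2: "opmul d L B A s t = B s m2 * A m2 t"
    unfolding opmul_def
  proof (rule sum_single[OF finite_cfgs m2S])
    fix m assume mS: "m \<in> S" and ne: "m \<noteq> m2"
    show "B s m * A m t = 0"
    proof (cases "agree_off Y s m \<and> agree_off X m t")
      case True
      then have "m = m2" using XY unfolding m2_def agree_off_def by (intro ext) (metis disjoint_iff)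
      then show ?thesis using ne by simp
    next
      case False
      then show ?thesis using B0[OF s mS] A0[OF mS t] by auto
    qed
  qed
  show "opmul d L A B s t = opmul d L B A s t"
  proof (cases "\<forall>u. u \<notin> X \<and> u \<notin> Y \<longrightarrow> s u = t u")
    case True
    have "A s m1 = A m2 t"
    proof (rule A1[OF s m1S m2S t])
      show "agree_off X s m1" by (simp add: agree_off_def m1_def)
      show "agree_off X m2 t" using True by (auto simp: agree_off_def m2_def)
      show "\<forall>u\<in>X. s u = m2 u \<and> m1 u = t u" using XY by (auto simp: m1_def m2_def)
    qed
    moreover have "B m1 t = B s m2"
    proof (rule B1[OF m1S t s m2S])
      show "agree_off Y s m2" by (simp add: agree_off_def m2_def)
      show "agree_off Y m1 t" using True by (auto simp: agree_off_def m1_def)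
      show "\<forall>u\<in>Y. m1 u = s u \<and> t u = m2 u" using XY by (auto simp: m1_def m2_def)
    qed
    ultimately show ?thesis using e1 e2 by simp
  next
    case False
    then obtain u where u: "u \<notin> X" "u \<notin> Y" "s u \<noteq> t u" by auto
    have "m1 u = s u" "m2 u = s u" using u by (simp_all add: m1_def m2_def)
    then have "\<not> agree_off Y m1 t" "\<not> agree_off X m2 t" unfolding agree_off_def using u by metis+
    then have "B m1 t = 0" "A m2 t = 0" using B0[OF m1S t] A0[OF m2S t] by auto
    then show ?thesis using e1 e2 by simp
  qed
qed

lemma supp_comm:
  "supported d L X A \<Longrightarrow> supported d L Y B \<Longrightarrow> X \<inter> Y = {} \<Longrightarrow> comm (ap A) (ap B)"
  unfolding comm_def using supp_comm_op opeq_ap ap_mul by metis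

lemma ap_oprod_cons: "ap (oprod d L (x # xs)) \<psi> = ap x (ap (oprod d L xs) \<psi>)"
  unfolding oprod_def by (simp add: ap_mul)

lemma ap_oprod_nil: "ap (oprod d L []) \<psi> = rv \<psi>"
  unfolding oprod_def by (simp add: ap_idop)

lemma ap_oprod_Pl: "ap (oprod d L (map (\<lambda>A. compl_op (Q A)) l)) \<psi> = Pl (\<lambda>j. ap (Q j)) l \<psi>"
proof (induction l arbitrary: \<psi>)
  case Nil then show ?case by (simp add: ap_oprod_nil)
next
  case (Cons j l)
  show ?case by (simp only: list.map ap_oprod_cons Cons ap_compl Pl.simps)
qed

lemma idem_ap: "opeq d L (opmul d L A A) A \<Longrightarrow> idem (ap A)"
  unfolding idem_def using opeq_ap ap_mul by metis

lemma comm_ap: "opeq d L (opmul d L A B) (opmul d L B A) \<Longrightarrow> comm (ap A) (ap B)"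
  unfolding comm_def using opeq_ap ap_mul by metis


lemma ip_diff1: "ip (a - b) \<phi> = ip a \<phi> - ip b \<phi>"
  unfolding ip_def by (simp add: algebra_simps sum_subtractf)
lemma ip_zero1: "ip 0 \<phi> = 0"
  unfolding ip_def by simp

lemma sa_compl: assumes "lin P" "sa P" shows "sa (\<lambda>\<psi>. rv \<psi> - P \<psi>)"
  unfolding sa_def
proof (intro allI)
  fix \<phi> \<psi>
  have "ip (rv \<phi> - P \<phi>) \<psi> = ip \<phi> \<psi> - ip (P \<phi>) \<psi>" by (simp add: ip_diff1)
  also have "\<dots> = ip \<phi> \<psi> - ip \<phi> (P \<psi>)" using assms(2) by (simp add: sa_def)
  also have "\<dots> = ip \<phi> (rv \<psi> - P \<psi>)" by (simp add: ip_diff2)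
  finally show "ip (rv \<phi> - P \<phi>) \<psi> = ip \<phi> (rv \<psi> - P \<psi>)" .
qed

lemma idem_compl: assumes "lin P" "idem P" shows "idem (\<lambda>\<psi>. rv \<psi> - P \<psi>)"
  unfolding idem_def
proof
  fix \<phi>
  have "P (rv \<phi> - P \<phi>) = 0" using assms by (simp add: linD(2,4)[OF assms(1)] idem_def)
  moreover have "rv (rv \<phi> - P \<phi>) = rv \<phi> - P \<phi>" by (simp add: rv_diff linD(5)[OF assms(1)])
  ultimately show "rv (rv \<phi> - P \<phi>) - P (rv \<phi> - P \<phi>) = rv \<phi> - P \<phi>" by simp
qed

lemma comm_compl1: assumes "lin P" "lin h" "comm h P" shows "comm h (\<lambda>\<psi>. rv \<psi> - P \<psi>)"
  unfolding comm_def
proof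
  fix \<phi>
  have "h (rv \<phi> - P \<phi>) = h \<phi> - P (h \<phi>)"
    using assms(3) by (simp add: linD(2,4)[OF assms(2)] comm_def)
  also have "\<dots> = rv (h \<phi>) - P (h \<phi>)" by (simp add: linD(5)[OF assms(2)])
  finally show "h (rv \<phi> - P \<phi>) = rv (h \<phi>) - P (h \<phi>)" .
qed

lemma comm_sym: "comm f g \<Longrightarrow> comm g f" unfolding comm_def by simp

end


definition col1 :: "nat \<Rightarrow> nat \<Rightarrow> nat \<Rightarrow> nat" where
  "col1 L p x = (if L < 2 * p then x else if x < (L div p) * p then x mod p else p + (x - (L div p) * p))"

lemma col1_lt: "x < L \<Longrightarrow> 0 < p \<Longrightarrow> col1 L p x < 2 * p"
proof -
  assume x: "x < L" and p: "0 < p"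
  have "L - (L div p) * p < p" using p by (metis minus_div_mult_eq_mod mod_less_divisor)
  moreover have "x mod p < p" using p by simp
  ultimately show ?thesis using x unfolding col1_def by (auto simp del: mod_less_divisor)
qed

lemma core_disj:
  fixes x x' i i' p k L :: nat
  assumes "x < x'" "x' < k * p" "x mod p = x' mod p" "i < p" "i' < p" "k * p \<le> L"
  shows "(x + L - 1 + i) mod L \<noteq> (x' + L - 1 + i') mod L"
proof
  assume eq: "(x + L - 1 + i) mod L = (x' + L - 1 + i') mod L"
  have p: "0 < p" using assms(4) by simp
  have L: "1 \<le> L" using assms(1,2,6) by (metis less_le_trans not_less_zero le_less_linear less_one)
  have "int ((x + L - 1 + i) mod L) = int ((x' + L - 1 + i') mod L)" using eq by simp
  then have "int (x + L - 1 + i) mod int L = int (x' + L - 1 + i') mod int L" by (simp add: zmod_int)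
  then have dv: "int L dvd int (x' + L - 1 + i') - int (x + L - 1 + i)" by (metis mod_eq_dvd_iff)
  have D: "int (x' + L - 1 + i') - int (x + L - 1 + i) = int x' + int i' - int x - int i" using L by simp
  have dx: "x' div p > x div p"
  proof -
    have "x div p \<le> x' div p" using assms(1) by (simp add: div_le_mono)
    moreover have "x div p \<noteq> x' div p"
    proof
      assume "x div p = x' div p"
      then have "x = x'" using assms(3) by (metis div_mult_mod_eq)
      then show False using assms(1) by simp
    qed
    ultimately show ?thesis by simp
  qed
  have dk: "x' div p < k" using assms(2) p by (simp add: div_less_iff_less_mult)
  have ex: "int x' - int x = int p * (int (x' div p) - int (x div p))"
  proof -
    have "int x = int p * int (x div p) + int (x mod p)" by (metis div_mult_mod_eq of_nat_add of_nat_mult mult.commute)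
    moreover have "int x' = int p * int (x' div p) + int (x' mod p)" by (metis div_mult_mod_eq of_nat_add of_nat_mult mult.commute)
    ultimately show ?thesis using assms(3) by (simp add: algebra_simps)
  qed
  have lo: "int p \<le> int x' - int x"
  proof -
    have "1 \<le> int (x' div p) - int (x div p)" using dx by simp
    then have "int p * 1 \<le> int p * (int (x' div p) - int (x div p))" using p by (intro mult_left_mono) auto
    then show ?thesis using ex by simp
  qed
  have hi: "int x' - int x \<le> int p * (int k - 1)"
  proof -
    have "int (x' div p) - int (x div p) \<le> int k - 1" using dk by simp
    then have "int p * (int (x' div p) - int (x div p)) \<le> int p * (int k - 1)" using p by (intro mult_left_mono) auto
    then show ?thesis using ex by simp
  qed
  have pos: "0 < int x' + int i' - int x - int i" using lo assms(4) by simp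
  have kp: "int k * int p \<le> int L" using assms(6) by (metis of_nat_le_iff of_nat_mult)
  have small: "int x' + int i' - int x - int i < int L" using hi assms(5) kp by (simp add: algebra_simps)
  have "int L \<le> int x' + int i' - int x - int i" using dv D pos by (metis zdvd_imp_le)
  then show False using small by simp
qed

lemma col1_disj:
  assumes "2 * p \<le> L" "0 < p" "x < L" "x' < L" "x \<noteq> x'" "col1 L p x = col1 L p x'" "i < p" "i' < p"
  shows "(x + L - 1 + i) mod L \<noteq> (x' + L - 1 + i') mod L"
proof -
  define k where "k = L div p"
  have kp: "k * p \<le> L" unfolding k_def by (simp add: div_times_less_eq_dividend)
  have mlt: "z mod p < p" for z using assms(2) by simp
  have c: "x < k * p \<and> x' < k * p \<and> x mod p = x' mod p"
  proof -
    have e: "col1 L p z = (if z < k * p then z mod p else p + (z - k * p))" for z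
      using assms(1) unfolding col1_def k_def by simp
    have mx: "x mod p < p" "x' mod p < p" using mlt by auto
    show ?thesis
    proof (cases "x < k * p"; cases "x' < k * p")
      assume "x < k * p" "x' < k * p" then show ?thesis using assms(6) e[of x] e[of x'] by simp
    next
      assume "x < k * p" "\<not> x' < k * p" then show ?thesis using assms(6) e[of x] e[of x'] mx by simp
    next
      assume "\<not> x < k * p" "x' < k * p" then show ?thesis using assms(6) e[of x] e[of x'] mx by simp
    next
      assume "\<not> x < k * p" "\<not> x' < k * p" then show ?thesis using assms(5,6) e[of x] e[of x'] by simp
    qed
  qed
  show ?thesis
  proof (cases "x < x'")
    case True then show ?thesis using core_disj[of x x' k p i i' L] c assms kp by simp
  next
    case False
    then have "x' < x" using assms(5) by simp
    then show ?thesis using core_disj[of x' x k p i' i L] c assms kp by auto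
  qed
qed


definition corner :: "nat \<Rightarrow> nat \<Rightarrow> (nat \<times> nat) set \<Rightarrow> nat \<times> nat" where
  "corner L r A = (SOME c. fst c < L \<and> snd c < L \<and> A = block L (fst c) (snd c) r)"

lemma corner_spec:
  assumes "A \<in> squares L r"
  shows "fst (corner L r A) < L \<and> snd (corner L r A) < L \<and> A = block L (fst (corner L r A)) (snd (corner L r A)) r"
proof -
  obtain x y where "x < L" "y < L" "A = block L x y r" using assms unfolding squares_def by auto
  then have "\<exists>c. fst c < L \<and> snd c < L \<and> A = block L (fst c) (snd c) r" by (intro exI[of _ "(x,y)"]) auto
  then show ?thesis unfolding corner_def by (rule someI_ex)
qed

definition bigB :: "nat \<Rightarrow> nat \<Rightarrow> (nat \<times> nat) set \<Rightarrow> (nat \<times> nat) set" where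
  "bigB L r A = block L ((fst (corner L r A) + L - 1) mod L) ((snd (corner L r A) + L - 1) mod L) (r + 2)"

definition colr :: "nat \<Rightarrow> nat \<Rightarrow> (nat \<times> nat) set \<Rightarrow> nat \<times> nat" where
  "colr L r A = (col1 L (r + 2) (fst (corner L r A)), col1 L (r + 2) (snd (corner L r A)))"

lemma block_shift:
  assumes "0 < L"
  shows "block L x y r \<subseteq> block L ((x + L - 1) mod L) ((y + L - 1) mod L) (r + 2)"
proof
  fix u assume "u \<in> block L x y r"
  then obtain i j where ij: "i < r" "j < r" "u = ((x + i) mod L, (y + j) mod L)" unfolding block_def by auto
  have ex: "((x + L - 1) mod L + (i + 1)) mod L = (x + i) mod L" for x i
  proof -
    have "((x + L - 1) mod L + (i + 1)) mod L = (x + L - 1 + (i + 1)) mod L" by (rule mod_add_left_eq)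
    also have "x + L - 1 + (i + 1) = (x + i) + L" using assms by simp
    finally show ?thesis by simp
  qed
  show "u \<in> block L ((x + L - 1) mod L) ((y + L - 1) mod L) (r + 2)"
    unfolding block_def using ij ex[of x i] ex[of y j] by (intro CollectI exI[of _ "i + 1"] exI[of _ "j + 1"]) auto
qed

lemma block_shift_mem:
  assumes "u \<in> block L ((x + L - 1) mod L) ((y + L - 1) mod L) p"
  shows "\<exists>i j. i < p \<and> j < p \<and> u = ((x + L - 1 + i) mod L, (y + L - 1 + j) mod L)"
  using assms unfolding block_def by (auto simp: mod_add_left_eq)

lemma A_sub_bigB: "0 < L \<Longrightarrow> A \<in> squares L r \<Longrightarrow> A \<subseteq> bigB L r A"
  using corner_spec[of A L r] block_shift unfolding bigB_def by metis

lemma bigB_disj: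
  assumes L: "0 < L" and A: "A \<in> squares L r" and A': "A' \<in> squares L r" and ne: "A \<noteq> A'"
    and c: "colr L r A = colr L r A'"
  shows "bigB L r A \<inter> bigB L r A' = {}"
proof -
  define p where "p = r + 2"
  obtain x y where xy: "corner L r A = (x, y)" by (cases "corner L r A")
  obtain x' y' where xy': "corner L r A' = (x', y')" by (cases "corner L r A'")
  have s: "x < L" "y < L" "A = block L x y r" using corner_spec[OF A] xy by auto
  have s': "x' < L" "y' < L" "A' = block L x' y' r" using corner_spec[OF A'] xy' by auto
  have cx: "col1 L p x = col1 L p x'" and cy: "col1 L p y = col1 L p y'"
    using c xy xy' unfolding colr_def p_def by auto
  have p0: "0 < p" unfolding p_def by simp
  have dif: "x \<noteq> x' \<or> y \<noteq> y'" using ne s s' by auto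
  have big: "2 * p \<le> L"
  proof (rule ccontr)
    assume "\<not> 2 * p \<le> L"
    then have "x = x'" "y = y'" using cx cy unfolding col1_def by auto
    then show False using dif by simp
  qed
  show ?thesis
  proof (rule ccontr)
    assume "bigB L r A \<inter> bigB L r A' \<noteq> {}"
    then obtain u where u: "u \<in> bigB L r A" "u \<in> bigB L r A'" by auto
    obtain i j where ij: "i < p" "j < p" "u = ((x + L - 1 + i) mod L, (y + L - 1 + j) mod L)"
      using block_shift_mem[of u L x y p] u(1) xy unfolding bigB_def p_def by auto
    obtain i' j' where ij': "i' < p" "j' < p" "u = ((x' + L - 1 + i') mod L, (y' + L - 1 + j') mod L)"
      using block_shift_mem[of u L x' y' p] u(2) xy' unfolding bigB_def p_def by auto
    show False
    proof (cases "x \<noteq> x'")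
      case True
      then show False using col1_disj[OF big p0 s(1) s'(1) True cx ij(1) ij'(1)] ij(3) ij'(3) by simp
    next
      case False
      then have "y \<noteq> y'" using dif by simp
      then show False using col1_disj[OF big p0 s(2) s'(2) _ cy ij(2) ij'(2)] ij(3) ij'(3) by simp
    qed
  qed
qed

lemma colr_range: "A \<in> squares L r \<Longrightarrow> colr L r A \<in> {..<2 * (r + 2)} \<times> {..<2 * (r + 2)}"
  using corner_spec[of A L r] col1_lt[of "fst (corner L r A)" L "r+2"] col1_lt[of "snd (corner L r A)" L "r+2"] unfolding colr_def by auto

lemma squares_img: "squares L r = (\<lambda>(x, y). block L x y r) ` ({..<L} \<times> {..<L})"
  unfolding squares_def by auto

lemma finite_squares: "finite (squares L r)"
  unfolding squares_img by simp

lemma set_square_list: "set (square_list L r) = squares L r"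
  unfolding square_list_def squares_def by force

lemma distinct_square_list: "distinct (square_list L r)"
  unfolding square_list_def by simp

lemma square_nonempty: "0 < r \<Longrightarrow> A \<in> squares L r \<Longrightarrow> A \<noteq> {}"
  unfolding squares_def block_def by auto

lemma squares_nonempty: "0 < L \<Longrightarrow> squares L r \<noteq> {}"
  unfolding squares_def by auto



lemma distinct_concat_map:
  "distinct xs \<Longrightarrow> (\<forall>x\<in>set xs. distinct (f x)) \<Longrightarrow>
   (\<forall>x\<in>set xs. \<forall>y\<in>set xs. x \<noteq> y \<longrightarrow> set (f x) \<inter> set (f y) = {}) \<Longrightarrow> distinct (concat (map f xs))"
  by (induction xs) auto

context lat begin

lemma class_est:
  assumes L: "0 < L" and ff: "frustration_free_setup d L Q" and t2: "TQO2 d L Q Lstar"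
    and r: "1 \<le> r" "r \<le> Lstar"
    and hV: "\<forall>A\<in>squares L r. hermitian d L (V A) \<and> supported d L A (V A) \<and>
        opeq d L (opmul d L (V A) (ground_proj d L Q)) zeroop \<and>
        (\<forall>\<phi>. vnorm d L (opapp d L (V A) \<phi>) \<le> w * vnorm d L \<phi>)"
    and w: "0 \<le> w"
    and K: "K \<subseteq> squares L r" "\<forall>A\<in>K. \<forall>A'\<in>K. colr L r A = colr L r A'"
  shows "nm (\<Sum>A\<in>K. ap (V A) \<psi>) \<le> w * nm (\<Sum>j\<in>squares L 2. ap (Q j) \<psi>)"
proof -
  define q where "q = (\<lambda>j. ap (Q j))"
  define G where "G = squares L 2"
  define sql where "sql = square_list L 2"
  define B where "B = bigB L r"
  define lA where "lA = (\<lambda>A. filter (\<lambda>j. j \<subseteq> B A) sql)"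
  define P where "P = (\<lambda>A. Pl q (lA A))"
  define R where "R = (\<lambda>A \<psi>. rv \<psi> - P A \<psi>)"
  define Vm where "Vm = (\<lambda>A. ap (V A))"
  have finK: "finite K" using K(1) finite_squares finite_subset by blast
  have ffQ: "\<forall>j\<in>G. projector d L (Q j) \<and> supported d L j (Q j)"
    and ffC: "\<forall>i\<in>G. \<forall>j\<in>G. opeq d L (opmul d L (Q i) (Q j)) (opmul d L (Q j) (Q i))"
    using ff unfolding frustration_free_setup_def G_def by auto
  have qG: "\<forall>j\<in>G. lin (q j) \<and> sa (q j) \<and> idem (q j)"
    using ffQ unfolding q_def projector_def by (auto simp: lin_ap sa_ap idem_ap)
  have qC: "\<forall>i\<in>G. \<forall>j\<in>G. comm (q i) (q j)"
    using ffC unfolding q_def by (auto intro: comm_ap)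
  have lAG: "set (lA A) \<subseteq> G" for A unfolding lA_def sql_def G_def by (auto simp: set_square_list)
  have lAG': "j \<in> set (lA A) \<Longrightarrow> j \<in> G" for j A using lAG by blast
  have linP: "lin (P A)" for A unfolding P_def using lAG qG by (intro lin_Pl) auto
  have saP: "sa (P A)" for A unfolding P_def using lAG' qG qC by (intro sa_Pl) blast+
  have idemP: "idem (P A)" for A
    unfolding P_def idem_def using lAG' qG qC by (intro allI idem_Pl) blast+
  have commPP: "comm (P A) (P A')" for A A'
    unfolding comm_def
  proof
    fix \<phi>
    have "P A (P A' \<phi>) = P A' (P A \<phi>)"
      unfolding P_def
    proof (rule comm_Pl[where h="Pl q (lA A)" and l="lA A'"])
      show "lin (Pl q (lA A))" using linP unfolding P_def .
      show "\<forall>i\<in>set (lA A'). lin (q i)" using lAG' qG by blast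
      show "\<forall>i\<in>set (lA A'). comm (Pl q (lA A)) (q i)"
      proof
        fix i assume i: "i \<in> set (lA A')"
        have "q i (Pl q (lA A) \<chi>) = Pl q (lA A) (q i \<chi>)" for \<chi>
          by (rule comm_Pl[where h="q i" and l="lA A"]) (use i lAG' qG qC in blast)+
        then show "comm (Pl q (lA A)) (q i)" unfolding comm_def by simp
      qed
    qed
    then show "P A (P A' \<phi>) = P A' (P A \<phi>)" .
  qed
  have linR: "lin (R A)" for A unfolding R_def by (rule lin_diff_map[OF lin_rv linP])
  have saR: "sa (R A)" for A unfolding R_def by (rule sa_compl[OF linP saP])
  have idemR: "idem (R A)" for A unfolding R_def by (rule idem_compl[OF linP idemP])
  have commRR: "comm (R A) (R A')" for A A'
  proof -
    have "comm (R A) (P A')"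
      unfolding R_def by (rule comm_sym, rule comm_compl1[OF linP linP commPP])
    then show ?thesis unfolding R_def by (intro comm_compl1[OF linP lin_diff_map[OF lin_rv linP]]) (simp add: R_def)
  qed
  have Pap: "ap (local_proj d L Q (B A)) \<phi> = P A \<phi>" for A \<phi>
    unfolding local_proj_def P_def lA_def sql_def q_def by (rule ap_oprod_Pl)
  have VP0: "Vm A (P A \<phi>) = 0" if A: "A \<in> K" for A \<phi>
  proof -
    have AS: "A \<in> squares L r" using A K(1) by auto
    define x where "x = fst (corner L r A)"
    define y where "y = snd (corner L r A)"
    have xy: "x < L" "y < L" "A = block L x y r" using corner_spec[OF AS] unfolding x_def y_def by auto
    have BA: "B A = block L ((x + L - 1) mod L) ((y + L - 1) mod L) (r + 2)"
      unfolding B_def bigB_def x_def y_def ..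
    have T: "\<And>x y Op. x < L \<Longrightarrow> y < L \<Longrightarrow> supported d L (block L x y r) Op \<Longrightarrow>
        opeq d L (opmul d L Op (ground_proj d L Q)) zeroop \<Longrightarrow>
        opeq d L (opmul d L Op (local_proj d L Q (block L ((x + L - 1) mod L) ((y + L - 1) mod L) (r + 2)))) zeroop"
      using t2 r unfolding TQO2_def by blast
    have supp: "supported d L (block L x y r) (V A)" using hV AS xy(3) by auto
    have g: "opeq d L (opmul d L (V A) (ground_proj d L Q)) zeroop" using hV AS by auto
    have "opeq d L (opmul d L (V A) (local_proj d L Q (B A))) zeroop"
      unfolding BA by (rule T[OF xy(1,2) supp g])
    then have "ap (opmul d L (V A) (local_proj d L Q (B A))) \<phi> = ap zeroop \<phi>" by (rule opeq_ap)
    then show ?thesis by (simp add: ap_mul ap_zeroop Pap Vm_def)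
  qed
  have saV: "A \<in> K \<Longrightarrow> sa (Vm A)" for A unfolding Vm_def using hV K(1) by (auto intro: sa_ap)
  have PV0: "P A (Vm A \<phi>) = 0" if A: "A \<in> K" for A \<phi>
  proof -
    have "rv (P A (Vm A \<phi>)) = 0"
    proof (rule ip_all_zero)
      fix \<chi>
      have "ip \<chi> (P A (Vm A \<phi>)) = ip (P A \<chi>) (Vm A \<phi>)" using saP unfolding sa_def by metis
      also have "\<dots> = ip (Vm A (P A \<chi>)) \<phi>" using saV[OF A] unfolding sa_def by metis
      also have "\<dots> = 0" by (simp add: VP0[OF A] ip_zero1)
      finally show "ip \<chi> (P A (Vm A \<phi>)) = 0" .
    qed
    then show ?thesis by (simp add: linD(5)[OF linP])
  qed
  have linV: "lin (Vm A)" for A unfolding Vm_def by (rule lin_ap)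
  have VR: "Vm A (R A \<phi>) = Vm A \<phi>" if "A \<in> K" for A \<phi>
    unfolding R_def by (simp add: linD(2,4)[OF linV] VP0[OF that])
  have RV: "R A (Vm A \<phi>) = Vm A \<phi>" if "A \<in> K" for A \<phi>
    unfolding R_def by (simp add: linD(5)[OF linV] PV0[OF that])
  have nmV: "nm (Vm A \<phi>) \<le> w * nm \<phi>" if "A \<in> K" for A \<phi>
    using hV K(1) that unfolding Vm_def by (auto simp: nm_ap)
  have commVR: "comm (Vm A) (R A')" if A: "A \<in> K" and A': "A' \<in> K" and ne: "A \<noteq> A'" for A A'
  proof -
    have AS: "A \<in> squares L r" and AS': "A' \<in> squares L r" using A A' K(1) by auto
    have cc: "colr L r A = colr L r A'" using K(2) A A' by blast
    have disj: "B A \<inter> B A' = {}" unfolding B_def by (rule bigB_disj[OF L AS AS' ne cc])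
    have AB: "A \<subseteq> B A" unfolding B_def by (rule A_sub_bigB[OF L AS])
    have cq: "comm (Vm A) (q j)" if j: "j \<in> set (lA A')" for j
    proof -
      have jG: "j \<in> G" using j lAG by auto
      have "j \<subseteq> B A'" using j unfolding lA_def by auto
      then have dj: "A \<inter> j = {}" using disj AB by blast
      have s1: "supported d L A (V A)" using hV AS by blast
      have s2: "supported d L j (Q j)" using ffQ jG by blast
      show ?thesis unfolding Vm_def q_def by (rule supp_comm[OF s1 s2 dj])
    qed
    have "comm (Vm A) (P A')"
      unfolding comm_def P_def
    proof
      fix \<phi> show "Vm A (Pl q (lA A') \<phi>) = Pl q (lA A') (Vm A \<phi>)"
      proof (rule comm_Pl[OF linV])
        show "\<forall>i\<in>set (lA A'). comm (Vm A) (q i)" using cq by blast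
        show "\<forall>i\<in>set (lA A'). lin (q i)" using lAG' qG by blast
      qed
    qed
    then show ?thesis unfolding R_def by (rule comm_compl1[OF linP linV])
  qed
  have hyp: "cls_hyp w R Vm K"
    unfolding cls_hyp_def using linR saR idemR commRR linV VR RV nmV commVR by auto
  have step1: "nm ((\<Sum>A\<in>K. Vm A \<psi>) + (\<lambda>\<phi>. 0) \<psi>) \<le> w * nm ((\<Sum>A\<in>K. R A \<psi>) + sc (of_real 0) \<psi>)"
    by (rule class_bound[OF finK hyp w lin_zero_map]) (auto simp: comm_def lin_zero[OF linR] nm_nonneg)
  have sc0: "sc (of_real 0) \<psi> = 0" by (simp add: sc_def fun_eq_iff)
  have st1: "nm (\<Sum>A\<in>K. Vm A \<psi>) \<le> w * nm (\<Sum>A\<in>K. R A \<psi>)"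
    using step1 sc0 by (simp only: add_0_right)
  obtain Kl where Kl: "distinct Kl" "set Kl = K" using finite_distinct_list[OF finK] by blast
  define Ls where "Ls = map lA Kl"
  define E where "E = filter (\<lambda>j. \<forall>A\<in>K. \<not> j \<subseteq> B A) sql"
  have sL: "set (concat Ls) = {j \<in> set sql. \<exists>A\<in>K. j \<subseteq> B A}"
    unfolding Ls_def lA_def using Kl(2) by auto
  have sE: "set E = {j \<in> set sql. \<not> (\<exists>A\<in>K. j \<subseteq> B A)}"
    unfolding E_def by auto
  have setLE: "set (concat Ls @ E) = G"
  proof -
    have "set (concat Ls @ E) = set sql" unfolding set_append sL sE by blast
    then show ?thesis unfolding sql_def G_def set_square_list .
  qed
  have sG: "set (concat Ls @ E) \<subseteq> G" using setLE by simp
  have distLE: "distinct (concat Ls @ E)"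
  proof -
    have dsql: "distinct sql" unfolding sql_def by (rule distinct_square_list)
    have dl: "distinct (concat (map lA Kl))"
    proof (rule distinct_concat_map[OF Kl(1)])
      show "\<forall>x\<in>set Kl. distinct (lA x)" unfolding lA_def using dsql by simp
      show "\<forall>x\<in>set Kl. \<forall>y\<in>set Kl. x \<noteq> y \<longrightarrow> set (lA x) \<inter> set (lA y) = {}"
      proof (intro ballI impI)
        fix x y assume x: "x \<in> set Kl" and y: "y \<in> set Kl" and ne: "x \<noteq> y"
        have xs: "x \<in> squares L r" and ys: "y \<in> squares L r" using x y Kl(2) K(1) by auto
        have cc: "colr L r x = colr L r y" using K(2) x y Kl(2) by blast
        have disj: "B x \<inter> B y = {}" unfolding B_def by (rule bigB_disj[OF L xs ys ne cc])
        show "set (lA x) \<inter> set (lA y) = {}"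
        proof (rule ccontr)
          assume "set (lA x) \<inter> set (lA y) \<noteq> {}"
          then obtain j where j: "j \<in> set (lA x)" "j \<in> set (lA y)" by blast
          have j1: "j \<subseteq> B x" using j(1) unfolding lA_def by simp
          have j2: "j \<subseteq> B y" using j(2) unfolding lA_def by simp
          have j3: "j \<in> squares L 2" using j(1) unfolding lA_def sql_def set_filter set_square_list by simp
          have "j \<noteq> {}" using square_nonempty[of 2 j L] j3 by simp
          then obtain u where "u \<in> j" by blast
          then show False using j1 j2 disj by blast
        qed
      qed
    qed
    have dE: "distinct E" unfolding E_def using dsql by simp
    have di: "set (concat Ls) \<inter> set E = {}"
      unfolding sL sE by blast
    show ?thesis using dl dE di unfolding Ls_def distinct_append by blast
  qed
  have step2: "nm (Xf q Ls 0 \<psi>) \<le> nm (Yf q (concat Ls @ E) 0 \<psi>)"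
    using list_bound[OF qG qC, where n="length (concat Ls @ E)", rule_format, of Ls E 0 0 \<psi>] sG by simp
  have X: "Xf q Ls 0 \<psi> = (\<Sum>A\<in>K. R A \<psi>)"
  proof -
    have "sum_list (map (\<lambda>l. rv \<psi> - Pl q l \<psi>) Ls) = sum_list (map (\<lambda>A. R A \<psi>) Kl)"
      unfolding Ls_def R_def P_def by (simp add: comp_def)
    also have "\<dots> = (\<Sum>A\<in>K. R A \<psi>)" using Kl by (simp add: sum_list_distinct_conv_sum_set)
    finally show ?thesis unfolding Xf_def using sc0 by (simp only: add_0_right)
  qed
  have Y: "Yf q (concat Ls @ E) 0 \<psi> = (\<Sum>j\<in>G. q j \<psi>)"
  proof -
    have "sum_list (map (\<lambda>j. q j \<psi>) (concat Ls @ E)) = (\<Sum>j\<in>G. q j \<psi>)"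
      using sum_list_distinct_conv_sum_set[OF distLE, of "\<lambda>j. q j \<psi>"] setLE by simp
    then show ?thesis unfolding Yf_def using sc0 by (simp only: add_0_right)
  qed
  have s2: "nm (\<Sum>A\<in>K. R A \<psi>) \<le> nm (\<Sum>j\<in>G. q j \<psi>)" using step2 unfolding X Y .
  have "nm (\<Sum>A\<in>K. Vm A \<psi>) \<le> w * nm (\<Sum>j\<in>G. q j \<psi>)"
    by (rule order_trans[OF st1 mult_left_mono[OF s2 w]])
  then show ?thesis unfolding Vm_def q_def G_def .
qed

end


theorem mainTheorem6:
  fixes d :: nat
  shows "\<exists>C::real. \<forall>(L::nat) (Lstar::nat) (Q :: (nat \<times> nat) set \<Rightarrow> op) (r::nat)
            (V :: (nat \<times> nat) set \<Rightarrow> op) (w::real) (\<psi>::vec).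
     0 < L \<longrightarrow>
     frustration_free_setup d L Q \<longrightarrow> TQO1 d L Q Lstar \<longrightarrow> TQO2 d L Q Lstar \<longrightarrow>
     1 \<le> r \<longrightarrow> r \<le> Lstar \<longrightarrow>
     (\<forall>A\<in>squares L r.
        hermitian d L (V A) \<and> supported d L A (V A) \<and>
        opeq d L (opmul d L (V A) (ground_proj d L Q)) zeroop \<and>
        opeq d L (opmul d L (ground_proj d L Q) (V A)) zeroop \<and>
        (\<forall>\<phi>. vnorm d L (opapp d L (V A) \<phi>) \<le> w * vnorm d L \<phi>)) \<longrightarrow>
     vnorm d L (\<lambda>s. \<Sum>A\<in>squares L r. opapp d L (V A) \<psi> s)
       \<le> C * w * (real r)\<^sup>2 * vnorm d L (H0app d L Q \<psi>)"
proof (intro exI[of _ 36] allI impI)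
  fix L Lstar :: nat and Q :: "(nat \<times> nat) set \<Rightarrow> op" and r :: nat and V :: "(nat \<times> nat) set \<Rightarrow> op"
    and w :: real and \<psi> :: vec
  assume L: "0 < L" and ff: "frustration_free_setup d L Q" and t1: "TQO1 d L Q Lstar"
    and t2: "TQO2 d L Q Lstar" and r1: "1 \<le> r" and r2: "r \<le> Lstar"
    and hV0: "\<forall>A\<in>squares L r.
        hermitian d L (V A) \<and> supported d L A (V A) \<and>
        opeq d L (opmul d L (V A) (ground_proj d L Q)) zeroop \<and>
        opeq d L (opmul d L (ground_proj d L Q) (V A)) zeroop \<and>
        (\<forall>\<phi>. vnorm d L (opapp d L (V A) \<phi>) \<le> w * vnorm d L \<phi>)"
  interpret lat d L .
  have hV: "\<forall>A\<in>squares L r. hermitian d L (V A) \<and> supported d L A (V A) \<and>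
        opeq d L (opmul d L (V A) (ground_proj d L Q)) zeroop \<and>
        (\<forall>\<phi>. vnorm d L (opapp d L (V A) \<phi>) \<le> w * vnorm d L \<phi>)" using hV0 by blast
  define H where "H = (\<Sum>j\<in>squares L 2. ap (Q j) \<psi>)"
  have eqL: "vnorm d L (\<lambda>s. \<Sum>A\<in>squares L r. opapp d L (V A) \<psi> s) = nm (\<Sum>A\<in>squares L r. ap (V A) \<psi>)"
    by (rule nm_cong) (simp add: fun_sum_apply ap_def rv_def)
  have eqR: "vnorm d L (H0app d L Q \<psi>) = nm H"
    unfolding H_def H0app_def by (rule nm_cong) (simp add: fun_sum_apply ap_def rv_def)
  show "vnorm d L (\<lambda>s. \<Sum>A\<in>squares L r. opapp d L (V A) \<psi> s) \<le> 36 * w * (real r)\<^sup>2 * vnorm d L (H0app d L Q \<psi>)"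
  proof (cases "S = {}")
    case True
    then have "vnorm d L (\<lambda>s. \<Sum>A\<in>squares L r. opapp d L (V A) \<psi> s) = 0"
      "vnorm d L (H0app d L Q \<psi>) = 0" unfolding vnorm_def by simp_all
    then show ?thesis by simp
  next
    case False
    then obtain s0 where s0: "s0 \<in> S" by blast
    define \<phi>0 :: vec where "\<phi>0 = (\<lambda>s. if s = s0 then 1 else 0)"
    have "nm \<phi>0 = 1"
    proof -
      have "(\<Sum>s\<in>S. (cmod (\<phi>0 s))\<^sup>2) = (\<Sum>s\<in>S. if s = s0 then 1 else 0)"
        unfolding \<phi>0_def by (intro sum.cong) auto
      also have "\<dots> = 1" using s0 finite_cfgs by simp
      finally show ?thesis unfolding vnorm_def by simp
    qed
    moreover have A0: "block L 0 0 r \<in> squares L r" unfolding squares_def using L by auto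
    then have "nm (opapp d L (V (block L 0 0 r)) \<phi>0) \<le> w * nm \<phi>0" using hV by blast
    ultimately have "nm (opapp d L (V (block L 0 0 r)) \<phi>0) \<le> w" by simp
    then have w: "0 \<le> w" using nm_nonneg order_trans by blast
    define p where "p = r + 2"
    define Cols where "Cols = {..<2 * p} \<times> {..<2 * p}"
    define K where "K = (\<lambda>c. {A \<in> squares L r. colr L r A = c})"
    have finC: "finite Cols" unfolding Cols_def by simp
    have img: "colr L r ` squares L r \<subseteq> Cols" unfolding Cols_def p_def using colr_range by blast
    have grp: "(\<Sum>A\<in>squares L r. ap (V A) \<psi>) = (\<Sum>c\<in>Cols. \<Sum>A\<in>K c. ap (V A) \<psi>)"
      unfolding K_def by (rule sum.group[OF finite_squares finC img, symmetric])
    have cls: "nm (\<Sum>A\<in>K c. ap (V A) \<psi>) \<le> w * nm H" for c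
      unfolding H_def by (rule class_est[OF L ff t2 r1 r2 hV w]) (auto simp: K_def)
    have "nm (\<Sum>A\<in>squares L r. ap (V A) \<psi>) \<le> (\<Sum>c\<in>Cols. nm (\<Sum>A\<in>K c. ap (V A) \<psi>))"
      unfolding grp by (rule nm_sum)
    also have "\<dots> \<le> (\<Sum>c\<in>Cols. w * nm H)" by (rule sum_mono) (rule cls)
    also have "\<dots> = real (card Cols) * (w * nm H)" by simp
    also have "\<dots> \<le> 36 * (real r)\<^sup>2 * (w * nm H)"
    proof (rule mult_right_mono)
      have "card Cols = (2 * p) * (2 * p)" unfolding Cols_def by (simp add: card_cartesian_product)
      then have c: "real (card Cols) = 4 * (real p)\<^sup>2" by (simp add: power2_eq_square)
      have "real p \<le> 3 * real r" unfolding p_def using r1 by simp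
      then have "(real p)\<^sup>2 \<le> (3 * real r)\<^sup>2" by (rule power_mono) simp
      then show "real (card Cols) \<le> 36 * (real r)\<^sup>2" unfolding c by (simp add: power_mult_distrib)
      show "0 \<le> w * nm H" using w nm_nonneg by simp
    qed
    finally show ?thesis unfolding eqL eqR by (simp add: algebra_simps)
  qed
qed


end
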